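(* Assume the standing setting and the approximation setting of the context, with the stability conditions (S1), (S2) and (S-seq) and the consistency conditions (C1), (C2). Then the Strang splitting with spatial approximation is convergent at every time level $t>0$: for every $x\in X$, $$\lim_{n,m\to\infty}J_m[T_m(t/2n)S_m(t/n)T_m(t/2n)]^nP_mx=U(t)x,$$ i.e. for every $\varepsilon>0$ there is $N$ such that the norm of the difference is at most $\varepsilon$ for all $n,m\ge N$.
   Context: Standing setting: $X$ is a Banach space; $A$, $B$ are closed densely defined operators generating strongly continuous semigroups $(T(t))_{t\ge0}$, $(S(t))_{t\ge0}$ on $X$; the closure $\overline{A+B}$ satisfies $D(A)\cap D(B)\subset D(\overline{A+B})$ and generates a strongly continuous semigroup $(U(t))_{t\ge0}$. Approximation setting: $X_m$ ($m\in\mathbb{N}$) are Banach spaces, $P_m:X\to X_m$, $J_m:X_m\to X$ bounded linear operators with $P_mJ_m=I_m$, $J_mP_mx\to x$ for all $x\in X$, and $\|J_m\|\le M_J$, $\|P_m\|\le M_P$ for all $m$. Operators $A_m$, $B_m$ generate strongly continuous semigroups $(T_m(t))_{t\ge0}$, $(S_m(t))_{t\ge0}$ on $X_m$. Stability: (S1) there are $M_T\ge1$, $\omega_T$ with $\|T(h)\|,\|T_m(h)\|\le M_Te^{\omega_Th}$ for all $h>0$, $m$; (S2) there are $M_S\ge1$, $\omega_S$ with $\|S(h)\|,\|S_m(h)\|\le M_Se^{\omega_Sh}$ for all $h>0$, $m$; (S-seq) there are $M\ge1$, $\omega\in\mathbb{R}$ with $\|[S_m(t/n)T_m(t/n)]^k\|\le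 Me^{k\omega t/n}$ for all $t\ge0$, $k,n,m\in\mathbb{N}$. Consistency: (C1) $J_mA_mP_mx\to Ax$ for all $x\in D(A)$; (C2) $J_mB_mP_mx\to Bx$ for all $x\in D(B)$. *)

theory Defs
  imports "HOL-Analysis.Analysis"
begin

text \<open>Operators on a closed linear subspace V of a real Banach space.
  An unbounded operator is a pair (domain D, map A); only values on D matter.\<close>

definition closed_subspace :: "'b::banach set \<Rightarrow> bool" where
  "closed_subspace V \<longleftrightarrow> subspace V \<and> closed V"

definition bounded_op_on :: "'a::real_normed_vector set \<Rightarrow> 'b::real_normed_vector set \<Rightarrow> real \<Rightarrow> ('a \<Rightarrow> 'b) \<Rightarrow> bool" where
  "bounded_op_on V W K L \<longleftrightarrow>
     (\<forall>x\<in>V. L x \<in> W) \<and>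
     (\<forall>x\<in>V. \<forall>y\<in>V. L (x + y) = L x + L y) \<and>
     (\<forall>c. \<forall>x\<in>V. L (c *\<^sub>R x) = c *\<^sub>R L x) \<and>
     (\<forall>x\<in>V. norm (L x) \<le> K * norm x)"

definition C0_semigroup_on :: "'a::banach set \<Rightarrow> (real \<Rightarrow> 'a \<Rightarrow> 'a) \<Rightarrow> bool" where
  "C0_semigroup_on V T \<longleftrightarrow>
     (\<forall>t\<ge>0. \<exists>K. bounded_op_on V V K (T t)) \<and>
     (\<forall>x\<in>V. T 0 x = x) \<and>
     (\<forall>s\<ge>0. \<forall>t\<ge>0. \<forall>x\<in>V. T (s + t) x = T s (T t x)) \<and>
     (\<forall>x\<in>V. continuous_on {0..} (\<lambda>t. T t x))"

definition generator_on :: "'a::banach set \<Rightarrow> (real \<Rightarrow> 'a \<Rightarrow> 'a) \<Rightarrow> 'a set \<Rightarrow> ('a \<Rightarrow> 'a) \<Rightarrow> bool" where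
  "generator_on V T D A \<longleftrightarrow>
     D = {x\<in>V. \<exists>y. ((\<lambda>h. (1 / h) *\<^sub>R (T h x - x)) \<longlongrightarrow> y) (at_right 0)} \<and>
     (\<forall>x\<in>D. ((\<lambda>h. (1 / h) *\<^sub>R (T h x - x)) \<longlongrightarrow> A x) (at_right 0))"

definition generates_on :: "'a::banach set \<Rightarrow> 'a set \<Rightarrow> ('a \<Rightarrow> 'a) \<Rightarrow> (real \<Rightarrow> 'a \<Rightarrow> 'a) \<Rightarrow> bool" where
  "generates_on V D A T \<longleftrightarrow> C0_semigroup_on V T \<and> generator_on V T D A"

definition graph_of :: "'a set \<Rightarrow> ('a \<Rightarrow> 'a) \<Rightarrow> ('a \<times> 'a) set" where
  "graph_of D A = {(x, A x) | x. x \<in> D}"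

definition closed_operator :: "'a::banach set \<Rightarrow> ('a \<Rightarrow> 'a) \<Rightarrow> bool" where
  "closed_operator D A \<longleftrightarrow> closed (graph_of D A)"

definition densely_defined :: "'a::banach set \<Rightarrow> bool" where
  "densely_defined D \<longleftrightarrow> closure D = UNIV"

definition is_operator_closure :: "'a::banach set \<Rightarrow> ('a \<Rightarrow> 'a) \<Rightarrow> 'a set \<Rightarrow> ('a \<Rightarrow> 'a) \<Rightarrow> bool" where
  "is_operator_closure D F DC C \<longleftrightarrow> graph_of DC C = closure (graph_of D F)"

end

theory Submission
  imports Defs
begin


lemma bop_in: "bounded_op_on V W K L \<Longrightarrow> x \<in> V \<Longrightarrow> L x \<in> W"
  by (simp add: bounded_op_on_def)
lemma bop_add: "bounded_op_on V W K L \<Longrightarrow> x \<in> V \<Longrightarrow> y \<in> V \<Longrightarrow> L (x + y) = L x + L y"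
  by (simp add: bounded_op_on_def)
lemma bop_scale: "bounded_op_on V W K L \<Longrightarrow> x \<in> V \<Longrightarrow> L (c *\<^sub>R x) = c *\<^sub>R L x"
  by (simp add: bounded_op_on_def)
lemma bop_norm: "bounded_op_on V W K L \<Longrightarrow> x \<in> V \<Longrightarrow> norm (L x) \<le> K * norm x"
  by (simp add: bounded_op_on_def)
lemma bop_diff: "bounded_op_on V W K L \<Longrightarrow> subspace V \<Longrightarrow> x \<in> V \<Longrightarrow> y \<in> V \<Longrightarrow> L (x - y) = L x - L y"
proof -
  assume a: "bounded_op_on V W K L" "subspace V" "x \<in> V" "y \<in> V"
  have "(-1) *\<^sub>R y \<in> V" using a by (simp add: subspace_neg)
  then have "L (x + (-1) *\<^sub>R y) = L x + (-1) *\<^sub>R L y" using a bop_add bop_scale by metis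
  then show ?thesis by simp
qed
lemma bop_zero: "bounded_op_on V W K L \<Longrightarrow> subspace V \<Longrightarrow> L 0 = 0"
  using bop_scale[of V W K L 0 0] by (simp add: subspace_0)

lemma bop_nonneg: "bounded_op_on V W K L \<Longrightarrow> bounded_op_on V W (max K 0) L"
  unfolding bounded_op_on_def by (meson max.cobounded1 mult_right_mono norm_ge_zero order_trans)

lemma QD:
  fixes f :: "real \<Rightarrow> 'b::real_normed_vector"
  assumes "((\<lambda>r. (1/(r-s)) *\<^sub>R (f r - f s)) \<longlongrightarrow> v) (at s within S)"
  shows "(f has_vector_derivative v) (at s within S)"
proof -
  have "((\<lambda>r. (1/(r-s)) *\<^sub>R (f r - f s) - v) \<longlongrightarrow> 0) (at s within S)"
    using tendsto_diff[OF assms tendsto_const[of v]] by simp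
  then have 1: "((\<lambda>r. norm ((1/(r-s)) *\<^sub>R (f r - f s) - v)) \<longlongrightarrow> 0) (at s within S)"
    using tendsto_norm_zero by blast
  have 2: "eventually (\<lambda>r. norm ((1/(r-s)) *\<^sub>R (f r - f s) - v) =
      norm ((1 / norm (r - s)) *\<^sub>R (f r - (f s + (r - s) *\<^sub>R v)))) (at s within S)"
    unfolding eventually_at
  proof (intro exI[of _ 1] conjI ballI impI)
    fix r assume "r \<in> S" "r \<noteq> s \<and> dist r s < 1"
    then have rs: "r - s \<noteq> 0" by simp
    have e: "(1/(r-s)) *\<^sub>R ((r-s) *\<^sub>R v) = v" using rs by simp
    have "(1/(r-s)) *\<^sub>R (f r - (f s + (r - s) *\<^sub>R v)) = (1/(r-s)) *\<^sub>R (f r - f s) - (1/(r-s)) *\<^sub>R ((r-s) *\<^sub>R v)"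
      by (simp only: scaleR_diff_right diff_diff_add scaleR_add_right)
    then have "(1/(r-s)) *\<^sub>R (f r - f s) - v = (1/(r-s)) *\<^sub>R (f r - (f s + (r - s) *\<^sub>R v))"
      using e by simp
    then show "norm ((1/(r-s)) *\<^sub>R (f r - f s) - v) =
      norm ((1 / norm (r - s)) *\<^sub>R (f r - (f s + (r - s) *\<^sub>R v)))"
      by simp
  qed simp
  have "((\<lambda>r. (1 / norm (r - s)) *\<^sub>R (f r - (f s + (r - s) *\<^sub>R v))) \<longlongrightarrow> 0) (at s within S)"
    by (rule tendsto_norm_zero_cancel, rule Lim_transform_eventually[OF 1 2])
  then show ?thesis
    unfolding has_vector_derivative_def has_derivative_within
    by (simp add: bounded_linear_scaleR_left)
qed

locale c0V =
  fixes V :: "'b::banach set" and D :: "'b set" and A :: "'b \<Rightarrow> 'b" and T :: "real \<Rightarrow> 'b \<Rightarrow> 'b"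
  assumes V: "closed_subspace V" and gen: "generates_on V D A T"
begin

lemma sub: "subspace V" and clo: "closed V" using V by (auto simp: closed_subspace_def)
lemma semi: "C0_semigroup_on V T" and gnr: "generator_on V T D A"
  using gen by (auto simp: generates_on_def)

lemma T_lip: "0 \<le> s \<Longrightarrow> \<exists>L\<ge>0. bounded_op_on V V L (T s)"
  using semi bop_nonneg unfolding C0_semigroup_on_def by (meson max.cobounded2)

lemma T_in: "0 \<le> s \<Longrightarrow> y \<in> V \<Longrightarrow> T s y \<in> V"
  using T_lip bop_in by blast
lemma T_add: "0 \<le> s \<Longrightarrow> y \<in> V \<Longrightarrow> z \<in> V \<Longrightarrow> T s (y + z) = T s y + T s z"
  using T_lip bop_add by blast
lemma T_scale: "0 \<le> s \<Longrightarrow> y \<in> V \<Longrightarrow> T s (c *\<^sub>R y) = c *\<^sub>R T s y"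
  using T_lip bop_scale by blast
lemma T_diff: "0 \<le> s \<Longrightarrow> y \<in> V \<Longrightarrow> z \<in> V \<Longrightarrow> T s (y - z) = T s y - T s z"
  using T_lip bop_diff sub by blast
lemma T0: "y \<in> V \<Longrightarrow> T 0 y = y"
  using semi unfolding C0_semigroup_on_def by blast
lemma Tsg: "0 \<le> s \<Longrightarrow> 0 \<le> r \<Longrightarrow> y \<in> V \<Longrightarrow> T (s + r) y = T s (T r y)"
  using semi unfolding C0_semigroup_on_def by blast
lemma Tcont: "y \<in> V \<Longrightarrow> continuous_on {0..} (\<lambda>s. T s y)"
  using semi unfolding C0_semigroup_on_def by blast
lemma D_eq: "D = {x\<in>V. \<exists>y. ((\<lambda>h. (1 / h) *\<^sub>R (T h x - x)) \<longlongrightarrow> y) (at_right 0)}"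
  using gnr unfolding generator_on_def by blast
lemma D_sub: "y \<in> D \<Longrightarrow> y \<in> V" using D_eq by blast
lemma glim: "y \<in> D \<Longrightarrow> ((\<lambda>h. (1 / h) *\<^sub>R (T h y - y)) \<longlongrightarrow> A y) (at_right 0)"
  using gnr unfolding generator_on_def by blast
lemma A_in: "y \<in> D \<Longrightarrow> A y \<in> V"
proof -
  assume y: "y \<in> D"
  have "eventually (\<lambda>h. (1 / h) *\<^sub>R (T h y - y) \<in> V) (at_right (0::real))"
    unfolding eventually_at_right_field
    using y D_sub T_in sub by (intro exI[of _ 1]) (auto intro!: subspace_scale subspace_diff)
  then show ?thesis using Lim_in_closed_set[OF clo _ _ glim[OF y]] by simp
qed

lemma T_cont_pt: "0 \<le> s \<Longrightarrow> z \<in> V \<Longrightarrow> ((\<lambda>h. q h) \<longlongrightarrow> z) F \<Longrightarrow> eventually (\<lambda>h. q h \<in> V) F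
   \<Longrightarrow> ((\<lambda>h. T s (q h)) \<longlongrightarrow> T s z) F"
proof -
  assume s: "0 \<le> s" and z: "z \<in> V" and q: "((\<lambda>h. q h) \<longlongrightarrow> z) F" and ev: "eventually (\<lambda>h. q h \<in> V) F"
  obtain L where L: "L \<ge> 0" "bounded_op_on V V L (T s)" using T_lip[OF s] by blast
  have "((\<lambda>h. norm (q h - z)) \<longlongrightarrow> 0) F" using q tendsto_norm_zero_iff
    by (metis LIM_zero)
  then have "((\<lambda>h. L * norm (q h - z)) \<longlongrightarrow> 0) F" using tendsto_mult_right_zero by blast
  moreover have "eventually (\<lambda>h. norm (T s (q h) - T s z) \<le> L * norm (q h - z)) F"
    using ev proof eventually_elim
    case (elim h)
    then show ?case using T_diff[OF s elim z] bop_norm[OF L(2)] sub z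
      by (metis subspace_diff)
  qed
  ultimately have "((\<lambda>h. T s (q h) - T s z) \<longlongrightarrow> 0) F"
    by (rule Lim_null_comparison[rotated])
  then show ?thesis by (simp add: LIM_zero_iff)
qed

lemma D_inv: "y \<in> D \<Longrightarrow> 0 \<le> a \<Longrightarrow> T a y \<in> D \<and> A (T a y) = T a (A y)"
proof -
  assume y: "y \<in> D" and a: "0 \<le> a"
  have yV: "y \<in> V" using D_sub y .
  have ev: "eventually (\<lambda>h. (1 / h) *\<^sub>R (T h y - y) \<in> V) (at_right (0::real))"
    unfolding eventually_at_right_field
    using yV T_in sub by (intro exI[of _ 1]) (auto intro!: subspace_scale subspace_diff)
  have 1: "((\<lambda>h. T a ((1 / h) *\<^sub>R (T h y - y))) \<longlongrightarrow> T a (A y)) (at_right 0)"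
    by (rule T_cont_pt[OF a A_in[OF y] glim[OF y] ev])
  have 2: "eventually (\<lambda>h. T a ((1 / h) *\<^sub>R (T h y - y)) = (1 / h) *\<^sub>R (T h (T a y) - T a y)) (at_right (0::real))"
    unfolding eventually_at_right_field
  proof (intro exI[of _ 1] conjI allI impI)
    fix h :: real assume h: "0 < h" "h < 1"
    have "T h (T a y) = T (h + a) y" using Tsg h a yV by simp
    also have "\<dots> = T a (T h y)" using Tsg[of a h y] h a yV by (simp add: add.commute)
    finally show "T a ((1 / h) *\<^sub>R (T h y - y)) = (1 / h) *\<^sub>R (T h (T a y) - T a y)"
      using T_scale T_diff T_in a h yV sub by (simp add: subspace_diff)
  qed simp
  have 3: "((\<lambda>h. (1 / h) *\<^sub>R (T h (T a y) - T a y)) \<longlongrightarrow> T a (A y)) (at_right 0)"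
    using Lim_transform_eventually[OF 1 2] .
  have inD: "T a y \<in> D" using D_eq 3 T_in[OF a yV] by blast
  have "A (T a y) = T a (A y)"
    using tendsto_unique[OF _ glim[OF inD] 3] by simp
  then show ?thesis using inD by blast
qed

end


lemma at_left_to_0: "at_left a = filtermap (\<lambda>x. a - x) (at_right 0)" for a :: real
  using at_left_minus[of a] at_right_to_0[of "-a"] by (simp add: filtermap_filtermap)

lemma filterlim_at_left_to_0:
  "filterlim f F (at_left a) \<longleftrightarrow> filterlim (\<lambda>x. f (a - x)) F (at_right 0)" for a :: real
  unfolding filterlim_def filtermap_filtermap at_left_to_0[of a] ..

lemma eventually_at_right_0_lt: "d > 0 \<Longrightarrow> eventually (\<lambda>x::real. 0 < x \<and> x < d) (at_right 0)"
  unfolding eventually_at_right_field by auto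

locale sgV = c0V +
  fixes K w :: real
  assumes K1: "K \<ge> 1"
    and bnd: "\<And>h y. h > 0 \<Longrightarrow> y \<in> V \<Longrightarrow> norm (T h y) \<le> K * exp (w * h) * norm y"
begin

lemma KB_ge1: "0 \<le> b \<Longrightarrow> K * exp (\<bar>w\<bar> * b) \<ge> 1"
proof -
  assume b: "0 \<le> b"
  have "1 \<le> exp (\<bar>w\<bar> * b)" using b by (simp add: one_le_exp_iff)
  then show ?thesis using K1 mult_mono[of 1 K 1 "exp (\<bar>w\<bar> * b)"] by simp
qed

lemma T_bnd: "0 \<le> s \<Longrightarrow> s \<le> b \<Longrightarrow> y \<in> V \<Longrightarrow> norm (T s y) \<le> K * exp (\<bar>w\<bar> * b) * norm y"
proof -
  assume s: "0 \<le> s" "s \<le> b" and y: "y \<in> V"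
  show ?thesis
  proof (cases "s = 0")
    case True
    then show ?thesis using T0[OF y] KB_ge1[of b] s
      by (simp add: mult_le_cancel_right1 norm_ge_zero)
  next
    case False
    then have "norm (T s y) \<le> K * exp (w * s) * norm y" using bnd s y by simp
    also have "\<dots> \<le> K * exp (\<bar>w\<bar> * b) * norm y"
    proof -
      have "w * s \<le> \<bar>w\<bar> * b" using s
        by (metis abs_ge_self abs_ge_zero mult_mono order_trans mult_right_mono)
      then show ?thesis using K1 by (intro mult_right_mono mult_left_mono) auto
    qed
    finally show ?thesis .
  qed
qed

lemma deriv_right: "y \<in> D \<Longrightarrow> 0 \<le> s \<Longrightarrow>
   ((\<lambda>r. (1/(r-s)) *\<^sub>R (T r y - T s y)) \<longlongrightarrow> T s (A y)) (at_right s)"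
proof -
  assume y: "y \<in> D" and s: "0 \<le> s"
  have yV: "y \<in> V" using D_sub y .
  have ev: "eventually (\<lambda>h. (1 / h) *\<^sub>R (T h y - y) \<in> V) (at_right (0::real))"
    unfolding eventually_at_right_field
    using yV T_in sub by (intro exI[of _ 1]) (auto intro!: subspace_scale subspace_diff)
  have 1: "((\<lambda>h. T s ((1 / h) *\<^sub>R (T h y - y))) \<longlongrightarrow> T s (A y)) (at_right 0)"
    by (rule T_cont_pt[OF s A_in[OF y] glim[OF y] ev])
  have 2: "eventually (\<lambda>h. T s ((1 / h) *\<^sub>R (T h y - y)) = (1/((h + s)-s)) *\<^sub>R (T (h + s) y - T s y)) (at_right (0::real))"
    unfolding eventually_at_right_field
  proof (intro exI[of _ 1] conjI allI impI)
    fix h :: real assume h: "0 < h" "h < 1"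
    have "T (h + s) y = T s (T h y)" using Tsg[of s h y] h s yV by (simp add: add.commute)
    then show "T s ((1 / h) *\<^sub>R (T h y - y)) = (1/((h + s)-s)) *\<^sub>R (T (h + s) y - T s y)"
      using T_scale T_diff T_in s h yV sub by (simp add: subspace_diff)
  qed simp
  show ?thesis unfolding filterlim_at_right_to_0[of _ _ s]
    using Lim_transform_eventually[OF 1 2] by simp
qed

lemma deriv_left: "y \<in> D \<Longrightarrow> 0 < s \<Longrightarrow>
   ((\<lambda>r. (1/(r-s)) *\<^sub>R (T r y - T s y)) \<longlongrightarrow> T s (A y)) (at_left s)"
proof -
  assume y: "y \<in> D" and s: "0 < s"
  have yV: "y \<in> V" using D_sub y .
  have AyV: "A y \<in> V" using A_in y .
  let ?q = "\<lambda>h. (1 / h) *\<^sub>R (T h y - y)"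
  let ?L = "K * exp (\<bar>w\<bar> * s)"
  have qV: "\<And>h. 0 \<le> h \<Longrightarrow> ?q h \<in> V"
    using yV T_in sub by (auto intro!: subspace_scale subspace_diff)
  have 1: "((\<lambda>h. T (s - h) (A y)) \<longlongrightarrow> T s (A y)) (at_right 0)"
  proof (rule continuous_on_tendsto_compose[OF Tcont[OF AyV], where g = "\<lambda>h. s - h"])
    show "((\<lambda>h. s - h) \<longlongrightarrow> s) (at_right 0)"
      by (rule tendsto_eq_intros | simp)+
    show "s \<in> {0..}" using s by simp
    show "\<forall>\<^sub>F x in at_right 0. s - x \<in> {0..}"
      using eventually_at_right_0_lt[OF s] by eventually_elim auto
  qed
  have 2: "((\<lambda>h. T (s - h) (?q h - A y)) \<longlongrightarrow> 0) (at_right 0)"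
  proof -
    have "((\<lambda>h. ?q h - A y) \<longlongrightarrow> 0) (at_right 0)"
      using glim[OF y] by (simp add: LIM_zero)
    then have "((\<lambda>h. norm (?q h - A y)) \<longlongrightarrow> 0) (at_right 0)" by (rule tendsto_norm_zero)
    then have a: "((\<lambda>h. ?L * norm (?q h - A y)) \<longlongrightarrow> 0) (at_right 0)"
      by (rule tendsto_mult_right_zero)
    have "eventually (\<lambda>h. norm (T (s - h) (?q h - A y)) \<le> ?L * norm (?q h - A y)) (at_right 0)"
      using eventually_at_right_0_lt[OF s] proof eventually_elim
      case (elim h)
      then show ?case using T_bnd[of "s - h" s] qV[of h] AyV sub by (simp add: subspace_diff)
    qed
    then show ?thesis using a by (rule Lim_null_comparison)
  qed
  have 3: "((\<lambda>h. T (s - h) (?q h - A y) + T (s - h) (A y)) \<longlongrightarrow> 0 + T s (A y)) (at_right 0)"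
    using tendsto_add[OF 2 1] .
  have 4: "eventually (\<lambda>h. T (s - h) (?q h - A y) + T (s - h) (A y)
          = (1/((s - h)-s)) *\<^sub>R (T (s - h) y - T s y)) (at_right 0)"
    using eventually_at_right_0_lt[OF s] proof eventually_elim
    case (elim h)
    then have h: "0 < h" "h < s" by auto
    have "T s y = T (s - h) (T h y)" using Tsg[of "s - h" h y] h yV by simp
    have "T (s - h) (?q h) = (1/h) *\<^sub>R T (s - h) (T h y - y)"
      using T_scale[of "s-h" "T h y - y"] T_in[of h y] yV h sub by (simp add: subspace_diff)
    also have "\<dots> = (1/h) *\<^sub>R (T (s - h) (T h y) - T (s - h) y)"
      using T_diff[of "s-h" "T h y" y] T_in[of h y] yV h by simp
    also have "\<dots> = (1/((s - h)-s)) *\<^sub>R (T (s - h) y - T s y)"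
      using \<open>T s y = T (s - h) (T h y)\<close> by (simp add: scaleR_diff_right)
    finally have "(1/((s - h)-s)) *\<^sub>R (T (s - h) y - T s y) = T (s - h) (?q h)" by simp
    moreover have "T (s - h) (?q h - A y) + T (s - h) (A y) = T (s - h) (?q h)"
      using T_diff[of "s-h" "?q h" "A y"] qV[of h] AyV h by simp
    ultimately show ?case by simp
  qed
  show ?thesis unfolding filterlim_at_left_to_0[of _ _ s]
    using Lim_transform_eventually[OF 3 4] by simp
qed

lemma deriv: "y \<in> D \<Longrightarrow> 0 < s \<Longrightarrow> ((\<lambda>r. T r y) has_vector_derivative T s (A y)) (at s)"
  by (rule QD, rule filterlim_split_at[OF deriv_left deriv_right]) auto

lemma deriv0: "y \<in> D \<Longrightarrow> ((\<lambda>r. T r y) has_vector_derivative A y) (at 0 within {0..})"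
  using deriv_right[of y 0] T0[OF A_in] T0[OF D_sub]
  by (intro QD) (simp add: at_within_Ici_at_right)

lemma MV: "y \<in> D \<Longrightarrow> 0 < h \<Longrightarrow> (\<And>s. s \<in> {0..h} \<Longrightarrow> norm (T s (A y) - z) \<le> e)
   \<Longrightarrow> norm (T h y - y - h *\<^sub>R z) \<le> h * e"
proof -
  assume y: "y \<in> D" and h: "0 < h" and b: "\<And>s. s \<in> {0..h} \<Longrightarrow> norm (T s (A y) - z) \<le> e"
  have "((\<lambda>s. T s (A y)) has_integral (T h y - T 0 y)) {0..h}"
  proof (rule fundamental_theorem_of_calculus)
    show "0 \<le> h" using h by simp
    fix s assume s: "s \<in> {0..h}"
    show "((\<lambda>r. T r y) has_vector_derivative T s (A y)) (at s within {0..h})"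
    proof (cases "s = 0")
      case True
      then show ?thesis using deriv0[OF y] T0[OF A_in[OF y]]
        by (auto intro: has_vector_derivative_within_subset)
    next
      case False
      then show ?thesis using deriv[OF y, of s] s by (auto intro: has_vector_derivative_at_within)
    qed
  qed
  then have "((\<lambda>s. T s (A y) - z) has_integral (T h y - y - h *\<^sub>R z)) {0..h}"
    using has_integral_diff[OF _ has_integral_const_real[of z 0 h]] T0[OF D_sub[OF y]] h by simp
  then have "((\<lambda>s. T s (A y) - z) has_integral (T h y - y - h *\<^sub>R z)) (cbox 0 h)"
    by (simp add: box_real)
  from has_integral_bound[OF _ this, of e] b h order_trans[OF norm_ge_zero b[of 0]]
  show ?thesis by (simp add: mult.commute)
qed

end


lemma QD2:
  fixes f :: "real \<Rightarrow> 'b::real_normed_vector"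
  assumes "(f has_vector_derivative v) (at s within S)"
  shows "((\<lambda>r. (1/(r-s)) *\<^sub>R (f r - f s)) \<longlongrightarrow> v) (at s within S)"
proof -
  have 0: "((\<lambda>r. (1 / norm (r - s)) *\<^sub>R (f r - (f s + (r - s) *\<^sub>R v))) \<longlongrightarrow> 0) (at s within S)"
    using assms unfolding has_vector_derivative_def has_derivative_within by blast
  then have 1: "((\<lambda>r. norm ((1 / norm (r - s)) *\<^sub>R (f r - (f s + (r - s) *\<^sub>R v)))) \<longlongrightarrow> 0) (at s within S)"
    using tendsto_norm_zero by blast
  have 2: "eventually (\<lambda>r. norm ((1 / norm (r - s)) *\<^sub>R (f r - (f s + (r - s) *\<^sub>R v))) =
     norm ((1/(r-s)) *\<^sub>R (f r - f s) - v)) (at s within S)"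
    unfolding eventually_at
  proof (intro exI[of _ 1] conjI ballI impI)
    fix r assume "r \<in> S" "r \<noteq> s \<and> dist r s < 1"
    then have rs: "r - s \<noteq> 0" by simp
    have e: "(1/(r-s)) *\<^sub>R ((r-s) *\<^sub>R v) = v" using rs by simp
    have "(1/(r-s)) *\<^sub>R (f r - (f s + (r - s) *\<^sub>R v)) = (1/(r-s)) *\<^sub>R (f r - f s) - (1/(r-s)) *\<^sub>R ((r-s) *\<^sub>R v)"
      by (simp only: scaleR_diff_right diff_diff_add scaleR_add_right)
    then have "(1/(r-s)) *\<^sub>R (f r - f s) - v = (1/(r-s)) *\<^sub>R (f r - (f s + (r - s) *\<^sub>R v))"
      using e by simp
    then show "norm ((1 / norm (r - s)) *\<^sub>R (f r - (f s + (r - s) *\<^sub>R v))) = norm ((1/(r-s)) *\<^sub>R (f r - f s) - v)"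
      by simp
  qed simp
  have "((\<lambda>r. (1/(r-s)) *\<^sub>R (f r - f s) - v) \<longlongrightarrow> 0) (at s within S)"
    by (rule tendsto_norm_zero_cancel, rule Lim_transform_eventually[OF 1 2])
  then show ?thesis by (simp add: LIM_zero_iff)
qed

lemma MVI:
  fixes f :: "real \<Rightarrow> 'b::banach"
  assumes "(f has_integral i) {a..b}" "a \<le> b" "\<And>s. s \<in> {a..b} \<Longrightarrow> norm (f s - z) \<le> e"
  shows "norm (i - (b - a) *\<^sub>R z) \<le> (b - a) * e"
proof -
  have "((\<lambda>s. f s - z) has_integral (i - (b - a) *\<^sub>R z)) (cbox a b)"
    using has_integral_diff[OF assms(1) has_integral_const_real[of z a b]] assms(2) by (simp add: box_real)
  from has_integral_bound[OF _ this, of e] assms(2,3) order_trans[OF norm_ge_zero assms(3)[of a]]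
  show ?thesis by (simp add: mult.commute)
qed

locale c0U = c0V UNIV D A T for D :: "'a::banach set" and A T
begin

lemma T_bl: "0 \<le> h \<Longrightarrow> bounded_linear (T h)"
proof -
  assume h: "0 \<le> h"
  obtain L where L: "L \<ge> 0" "bounded_op_on UNIV UNIV L (T h)" using T_lip[OF h] by blast
  show ?thesis
    by (rule bounded_linear_intro[where K = L]) (use L in \<open>auto simp: bop_add bop_scale mult.commute dest: bop_norm\<close>)
qed

definition G :: "'a \<Rightarrow> real \<Rightarrow> 'a" where "G y r = integral {0..r} (\<lambda>s. T s y)"

lemma contI: "continuous_on {a..b} (\<lambda>s. T s y)" if "0 \<le> a"
  using continuous_on_subset[OF Tcont[of y]] that by auto

lemma G_int: "0 \<le> a \<Longrightarrow> a \<le> b \<Longrightarrow> ((\<lambda>s. T s y) has_integral (G y b - G y a)) {a..b}"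
proof -
  assume ab: "0 \<le> a" "a \<le> b"
  have "(\<lambda>s. T s y) integrable_on {0..b}" using contI[of 0 b y] by (simp add: integrable_continuous_real)
  then have "integral {0..a} (\<lambda>s. T s y) + integral {a..b} (\<lambda>s. T s y) = integral {0..b} (\<lambda>s. T s y)"
    using ab by (intro Henstock_Kurzweil_Integration.integral_combine) auto
  moreover have "((\<lambda>s. T s y) has_integral integral {a..b} (\<lambda>s. T s y)) {a..b}"
    using contI[of a b y] ab by (simp add: integrable_continuous_real integrable_integral)
  ultimately show ?thesis by (metis (no_types) G_def add_diff_cancel_left')
qed

lemma G0: "G y 0 = 0" by (simp add: G_def)

lemma G_scale: "G (c *\<^sub>R y) r = c *\<^sub>R G y r"
proof -
  have "integral {0..r} (\<lambda>s. T s (c *\<^sub>R y)) = integral {0..r} (\<lambda>s. c *\<^sub>R T s y)"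
    by (rule integral_cong) (simp add: T_scale)
  then show ?thesis by (simp add: G_def)
qed

lemma TG: "0 \<le> h \<Longrightarrow> 0 \<le> r \<Longrightarrow> T h (G y r) = G y (r + h) - G y h"
proof -
  assume h: "0 \<le> h" and r: "0 \<le> r"
  have "T h (G y r) = integral {0..r} (T h \<circ> (\<lambda>s. T s y))"
    unfolding G_def using contI[of 0 r y] T_bl[OF h]
    by (simp add: integral_linear integrable_continuous_real)
  also have "\<dots> = integral {0..r} ((\<lambda>s. T s y) \<circ> (+) h)"
    by (rule integral_cong) (use h Tsg in \<open>auto\<close>)
  also have "\<dots> = integral {h..r + h} (\<lambda>s. T s y)"
    using integral_shift_Icc_real[of 0 r "\<lambda>s. T s y" h] by (simp add: add.commute)
  also have "\<dots> = G y (r + h) - G y h"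
    using G_int[of h "r + h" y] h r by (simp add: integral_unique)
  finally show ?thesis .
qed

lemma G_dq: "0 \<le> r \<Longrightarrow> ((\<lambda>h. (1/h) *\<^sub>R (G y (r + h) - G y r)) \<longlongrightarrow> T r y) (at_right 0)"
proof -
  assume r: "0 \<le> r"
  have "((\<lambda>u. integral {0..u} (\<lambda>s. T s y)) has_vector_derivative T r y) (at r within {0..r+1})"
    using contI[of 0 "r+1" y] r by (intro integral_has_vector_derivative) auto
  then have "((\<lambda>u. G y u) has_vector_derivative T r y) (at r within {r..r+1})"
    unfolding G_def by (rule has_vector_derivative_within_subset) (use r in auto)
  then have "((\<lambda>u. (1/(u-r)) *\<^sub>R (G y u - G y r)) \<longlongrightarrow> T r y) (at_right r)"
    using QD2 at_within_Icc_at_right[of r "r+1"] by fastforce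
  then show ?thesis unfolding filterlim_at_right_to_0[of _ _ r] by (simp add: add.commute)
qed

lemma avg_D: "0 \<le> r \<Longrightarrow> G y r \<in> D \<and> A (G y r) = T r y - y"
proof -
  assume r: "0 \<le> r"
  have 1: "((\<lambda>h. (1/h) *\<^sub>R (G y (r + h) - G y r) - (1/h) *\<^sub>R (G y (0 + h) - G y 0)) \<longlongrightarrow> T r y - T 0 y) (at_right 0)"
    by (intro tendsto_diff G_dq r) simp
  have 2: "eventually (\<lambda>h. (1/h) *\<^sub>R (G y (r + h) - G y r) - (1/h) *\<^sub>R (G y (0 + h) - G y 0)
     = (1 / h) *\<^sub>R (T h (G y r) - G y r)) (at_right (0::real))"
    unfolding eventually_at_right_field
    by (intro exI[of _ 1]) (auto simp: TG r G0 algebra_simps)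
  have 3: "((\<lambda>h. (1 / h) *\<^sub>R (T h (G y r) - G y r)) \<longlongrightarrow> T r y - y) (at_right 0)"
    using Lim_transform_eventually[OF 1 2] T0 by simp
  have inD: "G y r \<in> D" using D_eq 3 by blast
  show ?thesis using inD tendsto_unique[OF _ glim[OF inD] 3] by simp
qed

lemma avg_lim: "((\<lambda>r. (1/r) *\<^sub>R G y r) \<longlongrightarrow> y) (at_right 0)"
  using G_dq[of 0 y] T0 by (simp add: G0)

lemma avg_dense: "closure {G y r | y r. 0 \<le> r} = UNIV"
proof -
  have "z \<in> closure {G y r | y r. 0 \<le> r}" for z
  proof -
    have "eventually (\<lambda>r. (1/r) *\<^sub>R G z r \<in> {G y r | y r. 0 \<le> r}) (at_right (0::real))"
      unfolding eventually_at_right_field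
    proof (intro exI[of _ 1] conjI allI impI)
      fix r :: real assume "0 < r" "r < 1"
      then show "(1/r) *\<^sub>R G z r \<in> {G y r | y r. 0 \<le> r}"
      proof -
        have "(1/r) *\<^sub>R G z r = G ((1/r) *\<^sub>R z) r \<and> 0 \<le> r" using G_scale[of "1/r" z r] \<open>0 < r\<close> by simp
        then show ?thesis by blast
      qed
    qed simp
    then show ?thesis using avg_lim[of z]
      by (intro closure_approachable[THEN iffD2] allI impI)
        (metis (mono_tags, lifting) eventually_happens' tendstoD eventually_conj_iff trivial_limit_at_right_real)
  qed
  then show ?thesis by auto
qed

lemma G_mv: "0 \<le> b \<Longrightarrow> 0 < h \<Longrightarrow> (\<And>s. s \<in> {b..b+h} \<Longrightarrow> norm (T s y - T b y) \<le> e)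
   \<Longrightarrow> norm (G y (b + h) - G y b - h *\<^sub>R T b y) \<le> h * e"
  using MVI[OF G_int[of b "b+h" y]] by simp

lemma avg_E:
  assumes r0: "0 \<le> r0" and t: "0 \<le> t" and e: "e > 0"
  shows "\<exists>d>0. \<forall>h a. 0 < h \<and> h < d \<and> 0 \<le> a \<and> a \<le> t \<longrightarrow>
     norm (T h (T a (G y r0)) - T a (G y r0) - h *\<^sub>R T a (A (G y r0))) \<le> e * h"
proof -
  have "uniformly_continuous_on {0..t+r0+1} (\<lambda>s. T s y)"
    using contI[of 0 "t+r0+1" y] by (simp add: compact_uniformly_continuous)
  then obtain d0 where d0: "d0 > 0" "\<And>s s'. s \<in> {0..t+r0+1} \<Longrightarrow> s' \<in> {0..t+r0+1} \<Longrightarrow> dist s' s < d0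
     \<Longrightarrow> dist (T s' y) (T s y) < e/2"
    unfolding uniformly_continuous_on_def using e by (meson half_gt_zero)
  show ?thesis
  proof (intro exI[of _ "min d0 1"] conjI allI impI)
    show "0 < min d0 1" using d0 by simp
    fix h a assume ha: "0 < h \<and> h < min d0 1 \<and> 0 \<le> a \<and> a \<le> t"
    have mv: "norm (G y (b + h) - G y b - h *\<^sub>R T b y) \<le> h * (e/2)" if b: "0 \<le> b" "b \<le> t + r0" for b
    proof (rule G_mv)
      fix s assume "s \<in> {b..b+h}"
      then have "dist s b < d0" "s \<in> {0..t+r0+1}" "b \<in> {0..t+r0+1}" using ha b by (auto simp: dist_real_def)
      then show "norm (T s y - T b y) \<le> e/2" using d0(2)[of b s] by (simp add: dist_norm)
    qed (use b ha in auto)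
    have GD: "G y r0 \<in> D" "A (G y r0) = T r0 y - y" using avg_D[OF r0] by auto
    have eq1: "T a (G y r0) = G y (r0 + a) - G y a" using TG ha r0 by simp
    have "T h (T a (G y r0)) = T (h + a) (G y r0)" using Tsg[of h a "G y r0"] ha by simp
    also have "\<dots> = G y (r0 + (h + a)) - G y (h + a)" using TG[of "h + a" r0 y] ha r0 by simp
    finally have eq2: "T h (T a (G y r0)) = G y (r0 + a + h) - G y (a + h)" by (simp add: ac_simps)
    have eq3: "T a (A (G y r0)) = T (r0 + a) y - T a y"
      using GD T_diff[of a "T r0 y" y] Tsg[of a r0 y] ha r0 by (simp add: add.commute)
    have "T h (T a (G y r0)) - T a (G y r0) - h *\<^sub>R T a (A (G y r0)) =
       (G y ((r0 + a) + h) - G y (r0 + a) - h *\<^sub>R T (r0 + a) y) - (G y (a + h) - G y a - h *\<^sub>R T a y)"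
      by (simp only: eq2, simp add: eq1 eq3 algebra_simps)
    also have "norm \<dots> \<le> h * (e/2) + h * (e/2)"
      by (rule order_trans[OF norm_triangle_ineq4 add_mono]; rule mv; use ha r0 t in auto)
    finally show "norm (T h (T a (G y r0)) - T a (G y r0) - h *\<^sub>R T a (A (G y r0))) \<le> e * h"
      by (simp add: algebra_simps)
  qed
qed

end




abbreviation FF :: "(real \<times> nat) filter" where "FF \<equiv> at_right (0::real) \<times>\<^sub>F sequentially"

lemma EVI: "\<exists>d>0. \<exists>N. \<forall>h m. 0 < h \<longrightarrow> h < d \<longrightarrow> N \<le> m \<longrightarrow> Q h m
  \<Longrightarrow> eventually (\<lambda>p. Q (fst p) (snd p)) FF"
  unfolding eventually_prod_filter
proof -
  assume "\<exists>d>0. \<exists>N. \<forall>h m. 0 < h \<longrightarrow> h < d \<longrightarrow> N \<le> m \<longrightarrow> Q h m"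
  then obtain d N where d: "d > 0" "\<forall>h m. 0 < h \<longrightarrow> h < d \<longrightarrow> N \<le> m \<longrightarrow> Q h m" by blast
  show "\<exists>Pf Pg. eventually Pf (at_right 0) \<and> eventually Pg sequentially \<and> (\<forall>x y. Pf x \<longrightarrow> Pg y \<longrightarrow> Q (fst (x, y)) (snd (x, y)))"
    by (rule exI[of _ "\<lambda>h. 0 < h \<and> h < d"], rule exI[of _ "\<lambda>m. N \<le> m"])
      (use d in \<open>auto simp: eventually_at_right_field eventually_sequentially\<close>)
qed

lemma EVD: "eventually (\<lambda>p. Q (fst p) (snd p)) FF \<Longrightarrow>
   \<exists>d>0. \<exists>N. \<forall>h m. 0 < h \<longrightarrow> h < d \<longrightarrow> N \<le> m \<longrightarrow> Q h m"
proof -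
  assume "eventually (\<lambda>p. Q (fst p) (snd p)) FF"
  then obtain Pf Pg where "eventually Pf (at_right 0)" "eventually Pg sequentially"
     "\<forall>x y. Pf x \<longrightarrow> Pg y \<longrightarrow> Q x y" unfolding eventually_prod_filter by force
  then obtain b N where b: "b > 0" "\<And>y. 0 < y \<Longrightarrow> y < b \<Longrightarrow> Pf y" and N: "\<And>m. N \<le> m \<Longrightarrow> Pg m"
    and PQ: "\<forall>x y. Pf x \<longrightarrow> Pg y \<longrightarrow> Q x y"
    unfolding eventually_at_right_field eventually_sequentially by auto
  show ?thesis using b N PQ by blast
qed

lemma dense_ext:
  fixes Lf :: "'i \<Rightarrow> 'a::real_normed_vector \<Rightarrow> real"
  assumes W: "closure W = UNIV"
    and conv: "\<And>z e. z \<in> W \<Longrightarrow> e > 0 \<Longrightarrow> eventually (\<lambda>i. Lf i z \<le> e) F"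
    and lip: "eventually (\<lambda>i. \<forall>z z'. Lf i z \<le> Lf i z' + B * norm (z - z')) F"
    and B: "B \<ge> 0" and e: "e > 0"
  shows "eventually (\<lambda>i. Lf i z \<le> e) F"
proof -
  have "z \<in> closure W" using W by simp
  then obtain z' where z': "z' \<in> W" "dist z' z < e / (2 * (B + 1))"
  proof -
    have "e / (2 * (B + 1)) > 0" using e B by simp
    then show ?thesis using that \<open>z \<in> closure W\<close> unfolding closure_approachable by blast
  qed
  have "B * norm (z - z') \<le> (B + 1) * (e / (2 * (B + 1)))"
    using z'(2) B by (intro mult_mono) (auto simp: dist_norm norm_minus_commute)
  also have "\<dots> = e / 2" using B by (simp add: field_simps)
  finally have zz: "B * norm (z - z') \<le> e / 2" .
  have c: "eventually (\<lambda>i. Lf i z' \<le> e/2) F" using conv[OF z'(1), of "e/2"] e by simp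
  show ?thesis using c lip
  proof (eventually_elim)
    case (elim i)
    then have "Lf i z \<le> Lf i z' + B * norm (z - z')" by blast
    then show ?case using zz elim(1) by linarith
  qed
qed

locale appr =
  fixes V :: "nat \<Rightarrow> 'b::banach set" and P :: "nat \<Rightarrow> 'a::banach \<Rightarrow> 'b" and J :: "nat \<Rightarrow> 'b \<Rightarrow> 'a"
    and MP MJ :: real and DA :: "'a set" and A :: "'a \<Rightarrow> 'a"
    and DAm :: "nat \<Rightarrow> 'b set" and Am :: "nat \<Rightarrow> 'b \<Rightarrow> 'b" and Tm :: "nat \<Rightarrow> real \<Rightarrow> 'b \<Rightarrow> 'b"
    and K w :: real
  assumes V_sub: "\<And>m. closed_subspace (V m)"
    and P_bd: "\<And>m. bounded_op_on UNIV (V m) MP (P m)"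
    and J_bd: "\<And>m. bounded_op_on (V m) UNIV MJ (J m)"
    and PJ: "\<And>m y. y \<in> V m \<Longrightarrow> P m (J m y) = y"
    and Am_gen: "\<And>m. generates_on (V m) (DAm m) (Am m) (Tm m)"
    and K1: "K \<ge> 1"
    and bnd: "\<And>m h y. h > 0 \<Longrightarrow> y \<in> V m \<Longrightarrow> norm (Tm m h y) \<le> K * exp (w * h) * norm y"
    and dense: "densely_defined DA"
    and C1: "\<And>x. x \<in> DA \<Longrightarrow> (\<forall>\<^sub>F m in sequentially. P m x \<in> DAm m) \<and>
               (\<lambda>m. J m (Am m (P m x))) \<longlonglongrightarrow> A x"
begin

lemma sg: "sgV (V m) (DAm m) (Am m) (Tm m) K w"
proof
  show "closed_subspace (V m)" by (rule V_sub)
  show "generates_on (V m) (DAm m) (Am m) (Tm m)" by (rule Am_gen)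
  show "K \<ge> 1" by (rule K1)
  show "\<And>h y. h > 0 \<Longrightarrow> y \<in> V m \<Longrightarrow> norm (Tm m h y) \<le> K * exp (w * h) * norm y" by (rule bnd)
qed

definition "MP' = max MP 0"
definition "KB = K * exp \<bar>w\<bar>"

lemma MP'0: "MP' \<ge> 0" by (simp add: MP'_def)
lemma KB1: "KB \<ge> 1" using sgV.KB_ge1[OF sg, of 1] by (simp add: KB_def)

lemma subV: "subspace (V m)" using V_sub by (simp add: closed_subspace_def)
lemma P_in: "P m x \<in> V m" using P_bd bop_in by blast
lemma P_diff: "P m (x - y) = P m x - P m y" using P_bd bop_diff[OF P_bd] by simp
lemma P_add: "P m (x + y) = P m x + P m y" using P_bd bop_add[OF P_bd] by simp
lemma P_scale: "P m (c *\<^sub>R x) = c *\<^sub>R P m x" using P_bd bop_scale[OF P_bd] by simp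
lemma P_norm: "norm (P m x) \<le> MP' * norm x"
  using bop_norm[OF bop_nonneg[OF P_bd]] by (simp add: MP'_def)
lemma Pback: "y \<in> V m \<Longrightarrow> norm y \<le> MP' * norm (J m y)"
  using P_norm[of m "J m y"] PJ by simp

lemma T_bnd1: "0 \<le> s \<Longrightarrow> s \<le> 1 \<Longrightarrow> y \<in> V m \<Longrightarrow> norm (Tm m s y) \<le> KB * norm y"
  using sgV.T_bnd[OF sg, of s 1 y] by (simp add: KB_def)

lemma Z_D:
  assumes w: "w' \<in> DA" and e: "e > 0"
  shows "eventually (\<lambda>p. \<forall>s\<in>{0..fst p}. norm (Tm (snd p) s (P (snd p) w') - P (snd p) w') \<le> e) FF"
proof (rule EVI)
  have c1: "eventually (\<lambda>m. P m w' \<in> DAm m) sequentially" using conjunct1[OF C1[OF w]] .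
  have "eventually (\<lambda>m. dist (J m (Am m (P m w'))) (A w') < 1) sequentially"
    using tendstoD[OF conjunct2[OF C1[OF w]], of 1] by simp
  then have "eventually (\<lambda>m. norm (J m (Am m (P m w'))) \<le> norm (A w') + 1) sequentially"
  proof eventually_elim
    case (elim m)
    have "norm (J m (Am m (P m w'))) \<le> norm (A w') + norm (J m (Am m (P m w')) - A w')"
      by (rule norm_triangle_sub)
    then show ?case using elim by (simp add: dist_norm)
  qed
  with c1 have "eventually (\<lambda>m. P m w' \<in> DAm m \<and> norm (J m (Am m (P m w'))) \<le> norm (A w') + 1) sequentially"
    by (rule eventually_conj)
  then obtain N where N: "\<And>m. m \<ge> N \<Longrightarrow> P m w' \<in> DAm m \<and> norm (J m (Am m (P m w'))) \<le> norm (A w') + 1"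
    unfolding eventually_sequentially by blast
  define B where "B = MP' * (norm (A w') + 1)"
  have B0: "B \<ge> 0" using MP'0 by (simp add: B_def)
  define d where "d = min 1 (e / (KB * B + 1))"
  have d0: "d > 0" using e B0 KB1 unfolding d_def
    by (auto intro!: divide_pos_pos add_nonneg_pos mult_nonneg_nonneg)
  show "\<exists>d>0. \<exists>N. \<forall>h m. 0 < h \<longrightarrow> h < d \<longrightarrow> N \<le> m \<longrightarrow>
      (\<forall>s\<in>{0..h}. norm (Tm m s (P m w') - P m w') \<le> e)"
  proof (intro exI[of _ d] conjI d0 exI[of _ N] allI impI ballI)
    fix h m s assume h: "0 < h" "h < d" "N \<le> m" and s: "s \<in> {0..h}"
    interpret sgV "V m" "DAm m" "Am m" "Tm m" K w by (rule sg)
    have Pd: "P m w' \<in> DAm m" and Jb: "norm (J m (Am m (P m w'))) \<le> norm (A w') + 1" using N h by auto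
    have "norm (Am m (P m w')) \<le> MP' * norm (J m (Am m (P m w')))" by (rule Pback[OF A_in[OF Pd]])
    also have "\<dots> \<le> B" unfolding B_def by (rule mult_left_mono[OF Jb MP'0])
    finally have AmB: "norm (Am m (P m w')) \<le> B" .
    show "norm (Tm m s (P m w') - P m w') \<le> e"
    proof (cases "s = 0")
      case True then show ?thesis using T0[OF P_in] e by simp
    next
      case False
      have "d \<le> 1" unfolding d_def by simp
      then have s0: "0 < s" "s \<le> 1" using s h False by auto
      have "norm (Tm m s (P m w') - P m w' - s *\<^sub>R 0) \<le> s * (KB * B)"
      proof (rule MV[OF Pd s0(1)])
        fix r assume "r \<in> {0..s}"
        then have "norm (Tm m r (Am m (P m w'))) \<le> KB * norm (Am m (P m w'))"
          using T_bnd1 A_in[OF Pd] s0 by auto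
        also have "\<dots> \<le> KB * B" using AmB KB1 by (simp add: mult_left_mono)
        finally show "norm (Tm m r (Am m (P m w')) - 0) \<le> KB * B" by simp
      qed
      also have "s * (KB * B) \<le> d * (KB * B + 1)"
        using s h B0 KB1 by (intro mult_mono) auto
      also have "\<dots> \<le> (e / (KB * B + 1)) * (KB * B + 1)"
        using B0 KB1 unfolding d_def by (intro mult_right_mono) auto
      also have "\<dots> = e"
      proof -
        have "KB * B \<ge> 0" using B0 KB1 by simp
        then have "KB * B + 1 \<noteq> 0" by linarith
        then show ?thesis by simp
      qed
      finally show ?thesis by simp
    qed
  qed
qed


lemma ev_snd: "eventually Q sequentially \<Longrightarrow> eventually (\<lambda>p. Q (snd p)) FF"
proof -
  assume "eventually Q sequentially"
  then obtain N where "\<And>m. N \<le> m \<Longrightarrow> Q m" unfolding eventually_sequentially by blast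
  then show ?thesis by (intro EVI exI[of _ 1] conjI exI[of _ N]) auto
qed

lemma ev_small: "d > 0 \<Longrightarrow> eventually (\<lambda>p. 0 < fst p \<and> fst p < d) FF"
  by (rule EVI, intro exI[of _ d] conjI exI[of _ 0]) auto

lemma Z:
  assumes e: "e > 0"
  shows "eventually (\<lambda>p. \<forall>s\<in>{0..fst p}. norm (Tm (snd p) s (P (snd p) w') - P (snd p) w') \<le> e) FF"
proof -
  define \<eta> where "\<eta> = e / (2 * ((KB + 1) * MP' + 1))"
  have eta: "\<eta> > 0" using e KB1 MP'0 unfolding \<eta>_def
    by (auto intro!: divide_pos_pos add_nonneg_pos mult_nonneg_nonneg mult_pos_pos)
  have "w' \<in> closure DA" using dense by (simp add: densely_defined_def)
  then obtain w'' where w'': "w'' \<in> DA" "dist w'' w' < \<eta>" using eta unfolding closure_approachable by blast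
  have small: "(KB + 1) * MP' * norm (w' - w'') \<le> e / 2"
  proof -
    have "(KB + 1) * MP' * norm (w' - w'') \<le> ((KB + 1) * MP' + 1) * \<eta>"
      using w''(2) KB1 MP'0 by (intro mult_mono) (auto simp: dist_norm norm_minus_commute)
    also have "\<dots> = e / 2"
    proof -
      have "(KB + 1) * MP' \<ge> 0" using KB1 MP'0 by simp
      then have "(KB + 1) * MP' + 1 \<noteq> 0" by linarith
      moreover have "c \<noteq> 0 \<Longrightarrow> c * (e / (2 * c)) = e / 2" for c :: real by (simp add: field_simps)
      ultimately show ?thesis unfolding \<eta>_def by blast
    qed
    finally show ?thesis .
  qed
  have e2: "e / 2 > 0" using e by simp
  show ?thesis using Z_D[OF w''(1) e2] ev_small[OF zero_less_one]
  proof eventually_elim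
    case (elim p)
    show ?case
    proof
      fix s assume s: "s \<in> {0..fst p}"
      let ?m = "snd p"
      interpret sgV "V ?m" "DAm ?m" "Am ?m" "Tm ?m" K w by (rule sg)
      have s1: "0 \<le> s" "s \<le> 1" using s elim by auto
      have eq: "Tm ?m s (P ?m w') - P ?m w' = (Tm ?m s (P ?m w'') - P ?m w'') + (Tm ?m s (P ?m (w' - w'')) - P ?m (w' - w''))"
        using T_diff[of s "P ?m w'" "P ?m w''"] s1 P_in by (simp add: P_diff algebra_simps)
      have "norm (Tm ?m s (P ?m (w' - w'')) - P ?m (w' - w'')) \<le> KB * norm (P ?m (w' - w'')) + norm (P ?m (w' - w''))"
        using T_bnd1[OF s1 P_in, of ?m "w' - w''"] norm_triangle_ineq4[of "Tm ?m s (P ?m (w' - w''))" "P ?m (w' - w'')"]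
        by linarith
      also have "\<dots> = (KB + 1) * norm (P ?m (w' - w''))" by (simp add: algebra_simps)
      also have "\<dots> \<le> (KB + 1) * (MP' * norm (w' - w''))" using KB1 P_norm by (intro mult_left_mono) auto
      also have "\<dots> \<le> e / 2" using small by (simp add: mult.assoc)
      finally have 2: "norm (Tm ?m s (P ?m (w' - w'')) - P ?m (w' - w'')) \<le> e / 2" .
      have 1: "norm (Tm ?m s (P ?m w'') - P ?m w'') \<le> e / 2" using elim s by blast
      show "norm (Tm ?m s (P ?m w') - P ?m w') \<le> e"
        unfolding eq using norm_triangle_ineq[of "Tm ?m s (P ?m w'') - P ?m w''" "Tm ?m s (P ?m (w' - w'')) - P ?m (w' - w'')"] 1 2
        by linarith
    qed
  qed
qed

lemma CONS:
  assumes d: "d \<in> DA" and e: "e > 0"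
  shows "eventually (\<lambda>p. P (snd p) d \<in> DAm (snd p) \<and>
     norm ((1 / fst p) *\<^sub>R (Tm (snd p) (fst p) (P (snd p) d) - P (snd p) d) - P (snd p) (A d)) \<le> e) FF"
proof -
  define e' where "e' = e / (2 * KB * (MP' + 1))"
  have e'0: "e' > 0" using e KB1 MP'0 by (simp add: e'_def)
  have c1: "eventually (\<lambda>m. P m d \<in> DAm m) sequentially" using conjunct1[OF C1[OF d]] .
  have c2: "eventually (\<lambda>m. dist (J m (Am m (P m d))) (A d) < e') sequentially"
    using tendstoD[OF conjunct2[OF C1[OF d]] e'0] .
  have ev1: "eventually (\<lambda>p. P (snd p) d \<in> DAm (snd p) \<and> dist (J (snd p) (Am (snd p) (P (snd p) d))) (A d) < e') FF"
    using eventually_conj[OF c1 c2] by (rule ev_snd)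
  have e2: "e / 2 > 0" using e by simp
  show ?thesis using ev1 Z[OF e2, of "A d"] ev_small[OF zero_less_one]
  proof eventually_elim
    case (elim p)
    let ?m = "snd p" and ?h = "fst p"
    interpret sgV "V ?m" "DAm ?m" "Am ?m" "Tm ?m" K w by (rule sg)
    have Pd: "P ?m d \<in> DAm ?m" using elim by blast
    have h: "0 < ?h" "?h < 1" using elim by auto
    have amv: "Am ?m (P ?m d) \<in> V ?m" by (rule A_in[OF Pd])
    have diffb: "norm (Am ?m (P ?m d) - P ?m (A d)) \<le> MP' * e'"
    proof -
      have "Am ?m (P ?m d) - P ?m (A d) = P ?m (J ?m (Am ?m (P ?m d)) - A d)"
        using PJ[OF amv] by (simp add: P_diff)
      also have "norm \<dots> \<le> MP' * norm (J ?m (Am ?m (P ?m d)) - A d)" by (rule P_norm)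
      also have "\<dots> \<le> MP' * e'" using elim MP'0 by (intro mult_left_mono) (auto simp: dist_norm)
      finally show ?thesis .
    qed
    have "norm (Tm ?m ?h (P ?m d) - P ?m d - ?h *\<^sub>R P ?m (A d)) \<le> ?h * (KB * (MP' * e') + e / 2)"
    proof (rule MV[OF Pd h(1)])
      fix r assume r: "r \<in> {0..?h}"
      have eq: "Tm ?m r (Am ?m (P ?m d)) - P ?m (A d) = Tm ?m r (Am ?m (P ?m d) - P ?m (A d)) + (Tm ?m r (P ?m (A d)) - P ?m (A d))"
        using T_diff[of r "Am ?m (P ?m d)" "P ?m (A d)"] r amv P_in by auto
      have "norm (Tm ?m r (Am ?m (P ?m d) - P ?m (A d))) \<le> KB * norm (Am ?m (P ?m d) - P ?m (A d))"
      proof -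
        have "Am ?m (P ?m d) - P ?m (A d) \<in> V ?m" using amv P_in subV subspace_diff by blast
        then show ?thesis using T_bnd1 r h by auto
      qed
      also have "\<dots> \<le> KB * (MP' * e')" using diffb KB1 by (intro mult_left_mono) auto
      finally have 1: "norm (Tm ?m r (Am ?m (P ?m d) - P ?m (A d))) \<le> KB * (MP' * e')" .
      have 2: "norm (Tm ?m r (P ?m (A d)) - P ?m (A d)) \<le> e / 2" using elim r by blast
      show "norm (Tm ?m r (Am ?m (P ?m d)) - P ?m (A d)) \<le> KB * (MP' * e') + e / 2"
        unfolding eq using norm_triangle_ineq[of "Tm ?m r (Am ?m (P ?m d) - P ?m (A d))" "Tm ?m r (P ?m (A d)) - P ?m (A d)"] 1 2
        by linarith
    qed
    moreover have "KB * (MP' * e') + e / 2 \<le> e"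
    proof -
      have "KB * (MP' * e') \<le> KB * ((MP' + 1) * e')" using KB1 e'0 by (intro mult_left_mono mult_right_mono) auto
      also have "\<dots> = e / 2"
      proof -
        have "k \<noteq> 0 \<Longrightarrow> c \<noteq> 0 \<Longrightarrow> k * (c * (e / (2 * k * c))) = e / 2" for k c :: real by (simp add: field_simps)
        moreover have "KB \<noteq> 0" "MP' + 1 \<noteq> 0" using KB1 MP'0 by auto
        ultimately show ?thesis unfolding e'_def by blast
      qed
      finally show ?thesis by simp
    qed
    ultimately have "norm (Tm ?m ?h (P ?m d) - P ?m d - ?h *\<^sub>R P ?m (A d)) \<le> ?h * e"
      using h by (smt (verit, best) mult_left_mono)
    moreover have "(1 / ?h) *\<^sub>R (Tm ?m ?h (P ?m d) - P ?m d) - P ?m (A d) = (1 / ?h) *\<^sub>R (Tm ?m ?h (P ?m d) - P ?m d - ?h *\<^sub>R P ?m (A d))"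
      using h by (simp add: scaleR_diff_right)
    ultimately show ?case using Pd h by (simp add: pos_divide_le_eq mult.commute)
  qed
qed

end




lemma bop_sum: "bounded_op_on V W B L \<Longrightarrow> subspace V \<Longrightarrow> (\<And>k. a k \<in> V) \<Longrightarrow> L (\<Sum>k<(n::nat). a k) = (\<Sum>k<n. L (a k))"
proof (induction n)
  case 0 then show ?case using bop_zero by simp
next
  case (Suc n)
  have "(\<Sum>k<n. a k) \<in> V" using Suc.prems by (intro subspace_sum) auto
  then show ?case using Suc bop_add[OF Suc.prems(1) _ Suc.prems(3)[of n]] by simp
qed

lemma LinSum:
  assumes L: "bounded_op_on V V B L" and V: "closed_subspace V" and a: "\<And>k. a k \<in> V" and s: "summable a"
  shows "(\<lambda>k. L (a k)) sums L (suminf a)"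
proof -
  have sub: "subspace V" and clo: "closed V" using V by (auto simp: closed_subspace_def)
  have ps: "(\<lambda>n. \<Sum>k<n. a k) \<longlonglongrightarrow> suminf a" using summable_LIMSEQ[OF s] .
  have psV: "\<And>n. (\<Sum>k<n. a k) \<in> V" using a sub by (intro subspace_sum) auto
  have sV: "suminf a \<in> V" using Lim_in_closed_set[OF clo _ _ ps] psV by simp
  have "(\<lambda>n. L (\<Sum>k<n. a k)) \<longlonglongrightarrow> L (suminf a)"
  proof -
    have "(\<lambda>n. norm ((\<Sum>k<n. a k) - suminf a)) \<longlonglongrightarrow> 0"
      using ps by (simp add: tendsto_norm_zero_iff LIM_zero)
    then have z: "(\<lambda>n. max B 0 * norm ((\<Sum>k<n. a k) - suminf a)) \<longlonglongrightarrow> 0"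
      by (rule tendsto_mult_right_zero)
    have "\<And>n. norm (L (\<Sum>k<n. a k) - L (suminf a)) \<le> max B 0 * norm ((\<Sum>k<n. a k) - suminf a)"
      using bop_diff[OF L sub psV sV] bop_norm[OF bop_nonneg[OF L]] psV sV sub
      by (metis subspace_diff)
    then have "(\<lambda>n. L (\<Sum>k<n. a k) - L (suminf a)) \<longlonglongrightarrow> 0"
      by (intro Lim_null_comparison[OF _ z]) auto
    then show ?thesis by (simp add: LIM_zero_iff)
  qed
  moreover have "\<And>n. L (\<Sum>k<n. a k) = (\<Sum>k<n. L (a k))" by (rule bop_sum[OF L sub]) (rule a)
  ultimately show ?thesis unfolding sums_def by simp
qed

lemma exp_le_aux: "0 \<le> (x::real) \<Longrightarrow> exp x \<le> 1 + x * exp x"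
proof -
  assume x: "0 \<le> x"
  have "exp x * (1 - x) \<le> 1"
  proof -
    have "1 - x \<le> exp (- x)" using exp_ge_add_one_self[of "-x"] by simp
    then have "exp x * (1 - x) \<le> exp x * exp (- x)" by (simp add: mult_left_mono)
    then show ?thesis by (simp add: exp_minus)
  qed
  then show ?thesis by (simp add: algebra_simps)
qed

locale disc =
  fixes V :: "'b::banach set" and F :: "'b \<Rightarrow> 'b" and \<tau> K \<omega> :: real
  assumes V: "closed_subspace V"
    and F_in: "\<And>y. y \<in> V \<Longrightarrow> F y \<in> V"
    and F_add: "\<And>y z. y \<in> V \<Longrightarrow> z \<in> V \<Longrightarrow> F (y + z) = F y + F z"
    and F_scale: "\<And>y c. y \<in> V \<Longrightarrow> F (c *\<^sub>R y) = c *\<^sub>R F y"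
    and pow: "\<And>k y. y \<in> V \<Longrightarrow> norm ((F ^^ k) y) \<le> K * exp (\<omega> * \<tau>) ^ k * norm y"
    and tau: "0 < \<tau>" "\<tau> \<le> 1" and om: "0 \<le> \<omega>" and K0: "0 \<le> K"
begin

lemma sub: "subspace V" and clo: "closed V" using V by (auto simp: closed_subspace_def)

lemma Fk_in: "y \<in> V \<Longrightarrow> (F ^^ k) y \<in> V"
  by (induction k) (auto simp: F_in)
lemma Fk_add: "y \<in> V \<Longrightarrow> z \<in> V \<Longrightarrow> (F ^^ k) (y + z) = (F ^^ k) y + (F ^^ k) z"
  by (induction k) (auto simp: F_add Fk_in)
lemma Fk_scale: "y \<in> V \<Longrightarrow> (F ^^ k) (c *\<^sub>R y) = c *\<^sub>R (F ^^ k) y"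
  by (induction k) (auto simp: F_scale Fk_in)
lemma Fk_bop: "bounded_op_on V V (K * exp (\<omega> * \<tau>) ^ k) (F ^^ k)"
  unfolding bounded_op_on_def using Fk_in Fk_add Fk_scale pow by blast
lemma Fk_diff: "y \<in> V \<Longrightarrow> z \<in> V \<Longrightarrow> (F ^^ k) (y - z) = (F ^^ k) y - (F ^^ k) z"
  using bop_diff[OF Fk_bop sub] .
lemma F_bop: "bounded_op_on V V (K * exp (\<omega> * \<tau>)) F"
  using Fk_bop[of 1] by simp
lemma F_diff: "y \<in> V \<Longrightarrow> z \<in> V \<Longrightarrow> F (y - z) = F y - F z"
  using bop_diff[OF F_bop sub] .

definition "lam = \<omega> * exp \<omega> + 1"
definition "q = 1 / (1 + lam * \<tau>)"
definition "\<rho> = q * exp (\<omega> * \<tau>)"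
definition "Rs y = (\<tau> * q) *\<^sub>R (\<Sum>k. q ^ k *\<^sub>R (F ^^ k) y)"

lemma lam_pos: "lam \<ge> 1" using om by (simp add: lam_def)
lemma q_pos: "0 < q" "q < 1"
proof -
  have "lam * \<tau> > 0" using lam_pos tau by simp
  then have "1 + lam * \<tau> > 1" by linarith
  then show "0 < q" "q < 1" unfolding q_def by auto
qed

lemma key_ineq: "exp (\<omega> * \<tau>) + \<tau> \<le> 1 + lam * \<tau>"
proof -
  have "exp (\<omega> * \<tau>) \<le> 1 + (\<omega> * \<tau>) * exp (\<omega> * \<tau>)" using exp_le_aux[of "\<omega> * \<tau>"] om tau by simp
  also have "(\<omega> * \<tau>) * exp (\<omega> * \<tau>) \<le> (\<omega> * \<tau>) * exp \<omega>"
  proof -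
    have "\<omega> * \<tau> \<le> \<omega>" using om tau by (simp add: mult_left_le)
    then show ?thesis using om tau by (intro mult_left_mono) auto
  qed
  finally show ?thesis unfolding lam_def by (simp add: algebra_simps)
qed

lemma rho: "0 \<le> \<rho>" "\<rho> < 1" "\<tau> * q / (1 - \<rho>) \<le> 1"
proof -
  show "0 \<le> \<rho>" using q_pos by (simp add: \<rho>_def)
  have "lam * \<tau> > 0" using lam_pos tau by simp
  then have d: "1 + lam * \<tau> > 0" by linarith
  have "1 - \<rho> = (1 + lam * \<tau> - exp (\<omega> * \<tau>)) / (1 + lam * \<tau>)"
    using d by (simp add: \<rho>_def q_def field_simps)
  moreover have "1 + lam * \<tau> - exp (\<omega> * \<tau>) \<ge> \<tau>" using key_ineq by simp
  ultimately have r: "1 - \<rho> \<ge> \<tau> / (1 + lam * \<tau>)" using d by (simp add: divide_right_mono)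
  have tp: "\<tau> / (1 + lam * \<tau>) > 0" using tau d by simp
  then show "\<rho> < 1" using r by linarith
  have "\<tau> * q = \<tau> / (1 + lam * \<tau>)" by (simp add: q_def)
  then have a: "\<tau> * q \<le> 1 - \<rho>" using r by simp
  have "1 - \<rho> > 0" using r tp by linarith
  then show "\<tau> * q / (1 - \<rho>) \<le> 1" using a by (simp add: pos_divide_le_eq)
qed

lemma term_bnd: "y \<in> V \<Longrightarrow> norm (q ^ k *\<^sub>R (F ^^ k) y) \<le> K * norm y * \<rho> ^ k"
proof -
  assume y: "y \<in> V"
  have "norm (q ^ k *\<^sub>R (F ^^ k) y) = q ^ k * norm ((F ^^ k) y)" using q_pos by simp
  also have "\<dots> \<le> q ^ k * (K * exp (\<omega> * \<tau>) ^ k * norm y)"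
    using pow[OF y] q_pos by (intro mult_left_mono) auto
  also have "\<dots> = K * norm y * \<rho> ^ k" by (simp add: \<rho>_def power_mult_distrib)
  finally show ?thesis .
qed

lemma summ: "y \<in> V \<Longrightarrow> summable (\<lambda>k. q ^ k *\<^sub>R (F ^^ k) y)"
  using rho by (intro summable_comparison_test'[OF summable_mult[OF summable_geometric[of \<rho>]] term_bnd]) auto

lemma summ_in: "y \<in> V \<Longrightarrow> (\<Sum>k. q ^ k *\<^sub>R (F ^^ k) y) \<in> V"
proof -
  assume y: "y \<in> V"
  have "\<And>n. (\<Sum>k<n. q ^ k *\<^sub>R (F ^^ k) y) \<in> V" using Fk_in y sub by (intro subspace_sum subspace_scale) auto
  then show ?thesis using Lim_in_closed_set[OF clo _ _ summable_LIMSEQ[OF summ[OF y]]] by simp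
qed

lemma Rs_in: "y \<in> V \<Longrightarrow> Rs y \<in> V"
  unfolding Rs_def using summ_in sub by (simp add: subspace_scale)

lemma Rs_bnd: "y \<in> V \<Longrightarrow> norm (Rs y) \<le> K * norm y"
proof -
  assume y: "y \<in> V"
  have s2: "summable (\<lambda>k. K * norm y * \<rho> ^ k)" using rho by (intro summable_mult summable_geometric) auto
  have s1: "summable (\<lambda>k. norm (q ^ k *\<^sub>R (F ^^ k) y))"
    by (rule summable_comparison_test'[OF s2]) (use term_bnd[OF y] in auto)
  have "norm (\<Sum>k. q ^ k *\<^sub>R (F ^^ k) y) \<le> (\<Sum>k. norm (q ^ k *\<^sub>R (F ^^ k) y))" by (rule summable_norm[OF s1])
  also have "\<dots> \<le> (\<Sum>k. K * norm y * \<rho> ^ k)" by (rule suminf_le[OF term_bnd[OF y] s1 s2])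
  also have "\<dots> = K * norm y / (1 - \<rho>)"
  proof -
    have n: "norm \<rho> < 1" using rho by simp
    show ?thesis unfolding suminf_mult[OF summable_geometric[OF n]] suminf_geometric[OF n] by simp
  qed
  finally have nS: "norm (\<Sum>k. q ^ k *\<^sub>R (F ^^ k) y) \<le> K * norm y / (1 - \<rho>)" .
  have "norm (Rs y) = (\<tau> * q) * norm (\<Sum>k. q ^ k *\<^sub>R (F ^^ k) y)" using q_pos tau by (simp add: Rs_def)
  also have "\<dots> \<le> (\<tau> * q) * (K * norm y / (1 - \<rho>))"
    by (rule mult_left_mono[OF nS]) (use q_pos tau in simp)
  also have "\<dots> = (\<tau> * q / (1 - \<rho>)) * (K * norm y)" by simp
  also have "\<dots> \<le> 1 * (K * norm y)" using rho K0 by (intro mult_right_mono) auto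
  finally show ?thesis by simp
qed

lemma Rs_add: "y \<in> V \<Longrightarrow> z \<in> V \<Longrightarrow> Rs (y + z) = Rs y + Rs z"
  unfolding Rs_def using suminf_add[OF summ summ, of y z]
  by (simp add: Fk_add scaleR_add_right[symmetric])
lemma Rs_scale: "y \<in> V \<Longrightarrow> Rs (c *\<^sub>R y) = c *\<^sub>R Rs y"
proof -
  assume y: "y \<in> V"
  have 1: "(\<Sum>k. q ^ k *\<^sub>R (F ^^ k) (c *\<^sub>R y)) = (\<Sum>k. c *\<^sub>R (q ^ k *\<^sub>R (F ^^ k) y))"
    by (rule arg_cong[where f=suminf], rule ext) (simp add: Fk_scale[OF y])
  have 2: "(\<Sum>k. c *\<^sub>R (q ^ k *\<^sub>R (F ^^ k) y)) = c *\<^sub>R (\<Sum>k. q ^ k *\<^sub>R (F ^^ k) y)"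
    by (rule suminf_scaleR_right[OF summ[OF y], symmetric])
  show ?thesis unfolding Rs_def 1 2 by simp
qed
lemma Rs_bop: "bounded_op_on V V K Rs"
  unfolding bounded_op_on_def using Rs_in Rs_add Rs_scale Rs_bnd by blast
lemma Rs_diff: "y \<in> V \<Longrightarrow> z \<in> V \<Longrightarrow> Rs (y - z) = Rs y - Rs z"
  using bop_diff[OF Rs_bop sub] .

lemma F_sums: "y \<in> V \<Longrightarrow> (\<lambda>k. q ^ k *\<^sub>R (F ^^ Suc k) y) sums F (\<Sum>k. q ^ k *\<^sub>R (F ^^ k) y)"
proof -
  assume y: "y \<in> V"
  have "(\<lambda>k. F (q ^ k *\<^sub>R (F ^^ k) y)) sums F (\<Sum>k. q ^ k *\<^sub>R (F ^^ k) y)"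
    by (rule LinSum[OF F_bop V _ summ[OF y]]) (use Fk_in y sub in \<open>auto intro: subspace_scale\<close>)
  then show ?thesis using F_scale Fk_in y by simp
qed

lemma F_summ: "y \<in> V \<Longrightarrow> F (\<Sum>k. q ^ k *\<^sub>R (F ^^ k) y) = (\<Sum>k. q ^ k *\<^sub>R (F ^^ Suc k) y)"
  using F_sums sums_unique by blast

lemma Rs_comm: "y \<in> V \<Longrightarrow> Rs (F y) = F (Rs y)"
proof -
  assume y: "y \<in> V"
  have "F (Rs y) = (\<tau> * q) *\<^sub>R F (\<Sum>k. q ^ k *\<^sub>R (F ^^ k) y)"
    unfolding Rs_def using F_scale summ_in y by simp
  also have "\<dots> = Rs (F y)" unfolding Rs_def F_summ[OF y]
    by (simp add: funpow_swap1)
  finally show ?thesis by simp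
qed

lemma Rs_eq: "y \<in> V \<Longrightarrow> F (Rs y) - Rs y = \<tau> *\<^sub>R (lam *\<^sub>R Rs y - y)"
proof -
  assume y: "y \<in> V"
  let ?S = "\<Sum>k. q ^ k *\<^sub>R (F ^^ k) y"
  have a: "(\<lambda>k. q ^ Suc k *\<^sub>R (F ^^ Suc k) y) sums (q *\<^sub>R F ?S)"
    using sums_scaleR_right[OF F_sums[OF y], of q] by (simp add: scaleR_scaleR)
  have "(\<lambda>k. q ^ k *\<^sub>R (F ^^ k) y) sums ((?S - y) + q ^ 0 *\<^sub>R (F ^^ 0) y)"
    using summable_sums[OF summ[OF y]] by simp
  then have b: "(\<lambda>k. q ^ Suc k *\<^sub>R (F ^^ Suc k) y) sums (?S - y)"
    by (subst sums_Suc_iff)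
  have qF: "q *\<^sub>R F ?S = ?S - y" using sums_unique2[OF a b] .
  have "F ?S = (1 / q) *\<^sub>R (q *\<^sub>R F ?S)" using q_pos by simp
  then have FS: "F ?S = (1 / q) *\<^sub>R (?S - y)" unfolding qF .
  have "lam * \<tau> > 0" using lam_pos tau by simp
  then have d: "1 + lam * \<tau> > 0" by linarith
  have "F (Rs y) - Rs y = (\<tau> * q) *\<^sub>R F ?S - (\<tau> * q) *\<^sub>R ?S"
    unfolding Rs_def using F_scale summ_in y by simp
  also have "\<dots> = \<tau> *\<^sub>R (?S - y) - (\<tau> * q) *\<^sub>R ?S" unfolding FS using q_pos by simp
  also have "\<dots> = \<tau> *\<^sub>R ((1 - q) *\<^sub>R ?S - y)" by (simp add: algebra_simps)
  also have "1 - q = lam * (\<tau> * q)" using d by (simp add: q_def field_simps)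
  also have "\<tau> *\<^sub>R ((lam * (\<tau> * q)) *\<^sub>R ?S - y) = \<tau> *\<^sub>R (lam *\<^sub>R Rs y - y)"
    unfolding Rs_def by simp
  finally show ?thesis .
qed

lemma Rs_key: "y \<in> V \<Longrightarrow> z \<in> V \<Longrightarrow> Rs (lam *\<^sub>R y - z) - y = Rs ((1 / \<tau>) *\<^sub>R (F y - y) - z)"
proof -
  assume y: "y \<in> V" and z: "z \<in> V"
  have FyV: "F y \<in> V" using F_in y .
  have e: "Rs (F y) - Rs y = \<tau> *\<^sub>R (lam *\<^sub>R Rs y - y)" using Rs_eq[OF y] Rs_comm[OF y] by simp
  have v1: "lam *\<^sub>R y \<in> V" "(1 / \<tau>) *\<^sub>R (F y - y) \<in> V" "F y - y \<in> V"
    using y FyV sub by (auto intro: subspace_scale subspace_diff)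
  have "Rs ((1 / \<tau>) *\<^sub>R (F y - y) - z) = (1 / \<tau>) *\<^sub>R (Rs (F y) - Rs y) - Rs z"
    using Rs_diff[OF v1(2) z] Rs_scale[OF v1(3)] Rs_diff[OF FyV y] by simp
  also have "\<dots> = lam *\<^sub>R Rs y - y - Rs z" unfolding e using tau by simp
  also have "\<dots> = Rs (lam *\<^sub>R y - z) - y" using Rs_diff[OF v1(1) z] Rs_scale[OF y] by simp
  finally show ?thesis by simp
qed

lemma Rs_Fk: "y \<in> V \<Longrightarrow> Rs ((F ^^ j) y) = (F ^^ j) (Rs y)"
  by (induction j) (auto simp: Rs_comm Fk_in Rs_in)

end




lemma ev_half: "eventually (\<lambda>p. Q (fst p) (snd p)) FF \<Longrightarrow> eventually (\<lambda>p. Q (fst p / 2) (snd p)) FF"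
proof -
  assume "eventually (\<lambda>p. Q (fst p) (snd p)) FF"
  then obtain d N where "d > 0" "\<forall>h m. 0 < h \<longrightarrow> h < d \<longrightarrow> N \<le> m \<longrightarrow> Q h m" using EVD by blast
  then show ?thesis by (intro EVI exI[of _ d] conjI exI[of _ N]) auto
qed

lemma ev_mono_FF: "eventually (\<lambda>p. Q (fst p) (snd p)) FF \<Longrightarrow> (\<And>h m. Q h m \<Longrightarrow> Q' h m) \<Longrightarrow>
   eventually (\<lambda>p. Q' (fst p) (snd p)) FF"
  by (erule eventually_mono) auto

locale main =
  fixes A B C :: "'a::banach \<Rightarrow> 'a" and DA DB DC :: "'a set"
    and T S U :: "real \<Rightarrow> 'a \<Rightarrow> 'a"
    and V :: "nat \<Rightarrow> 'b::banach set"
    and P :: "nat \<Rightarrow> 'a \<Rightarrow> 'b" and J :: "nat \<Rightarrow> 'b \<Rightarrow> 'a"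
    and Am Bm :: "nat \<Rightarrow> 'b \<Rightarrow> 'b" and DAm DBm :: "nat \<Rightarrow> 'b set"
    and Tm Sm :: "nat \<Rightarrow> real \<Rightarrow> 'b \<Rightarrow> 'b"
    and MJ MP MT \<omega>T MS \<omega>S M \<omega> :: real
  assumes A_cl: "closed_operator DA A" and A_dense: "densely_defined DA"
    and B_cl: "closed_operator DB B" and B_dense: "densely_defined DB"
    and A_gen: "generates_on UNIV DA A T"
    and B_gen: "generates_on UNIV DB B S"
    and C_closure: "is_operator_closure (DA \<inter> DB) (\<lambda>x. A x + B x) DC C"
    and C_dom: "DA \<inter> DB \<subseteq> DC"
    and C_gen: "generates_on UNIV DC C U"
    and V_sub: "\<And>m. closed_subspace (V m)"
    and P_bd: "\<And>m. bounded_op_on UNIV (V m) MP (P m)"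
    and J_bd: "\<And>m. bounded_op_on (V m) UNIV MJ (J m)"
    and PJ: "\<And>m y. y \<in> V m \<Longrightarrow> P m (J m y) = y"
    and JP: "\<And>x. (\<lambda>m. J m (P m x)) \<longlonglongrightarrow> x"
    and Am_gen: "\<And>m. generates_on (V m) (DAm m) (Am m) (Tm m)"
    and Bm_gen: "\<And>m. generates_on (V m) (DBm m) (Bm m) (Sm m)"
    and S1: "MT \<ge> 1" "\<And>h x. h > 0 \<Longrightarrow> norm (T h x) \<le> MT * exp (\<omega>T * h) * norm x"
      "\<And>m h y. h > 0 \<Longrightarrow> y \<in> V m \<Longrightarrow> norm (Tm m h y) \<le> MT * exp (\<omega>T * h) * norm y"
    and S2: "MS \<ge> 1" "\<And>h x. h > 0 \<Longrightarrow> norm (S h x) \<le> MS * exp (\<omega>S * h) * norm x"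
      "\<And>m h y. h > 0 \<Longrightarrow> y \<in> V m \<Longrightarrow> norm (Sm m h y) \<le> MS * exp (\<omega>S * h) * norm y"
    and Sseq: "M \<ge> 1"
      "\<And>t k n m y. t \<ge> 0 \<Longrightarrow> n \<ge> 1 \<Longrightarrow> y \<in> V m \<Longrightarrow>
         norm (((\<lambda>z. Sm m (t / real n) (Tm m (t / real n) z)) ^^ k) y)
           \<le> M * exp (real k * \<omega> * t / real n) * norm y"
    and C1: "\<And>x. x \<in> DA \<Longrightarrow> (\<forall>\<^sub>F m in sequentially. P m x \<in> DAm m) \<and>
               (\<lambda>m. J m (Am m (P m x))) \<longlonglongrightarrow> A x"
    and C2: "\<And>x. x \<in> DB \<Longrightarrow> (\<forall>\<^sub>F m in sequentially. P m x \<in> DBm m) \<and>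
               (\<lambda>m. J m (Bm m (P m x))) \<longlonglongrightarrow> B x"
begin

sublocale TA: appr V P J MP MJ DA A DAm Am Tm MT \<omega>T
  by unfold_locales (use V_sub P_bd J_bd PJ Am_gen S1 A_dense C1 in auto)
sublocale SB: appr V P J MP MJ DB B DBm Bm Sm MS \<omega>S
  by unfold_locales (use V_sub P_bd J_bd PJ Bm_gen S2 B_dense C2 in auto)
sublocale UU: c0U DC C U
  by unfold_locales (auto simp: closed_subspace_def C_gen)

abbreviation "KT \<equiv> TA.KB"
abbreviation "KS \<equiv> SB.KB"
abbreviation "MP' \<equiv> TA.MP'"

definition Fm :: "nat \<Rightarrow> real \<Rightarrow> 'b \<Rightarrow> 'b" where
  "Fm m \<tau> y = Tm m (\<tau> / 2) (Sm m \<tau> (Tm m (\<tau> / 2) y))"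

lemma Tsg_m: "sgV (V m) (DAm m) (Am m) (Tm m) MT \<omega>T" by (rule TA.sg)
lemma Ssg_m: "sgV (V m) (DBm m) (Bm m) (Sm m) MS \<omega>S" by (rule SB.sg)

lemma Tm_in: "0 \<le> s \<Longrightarrow> y \<in> V m \<Longrightarrow> Tm m s y \<in> V m" using c0V.T_in[OF sgV.axioms(1)[OF Tsg_m]] .
lemma Sm_in: "0 \<le> s \<Longrightarrow> y \<in> V m \<Longrightarrow> Sm m s y \<in> V m" using c0V.T_in[OF sgV.axioms(1)[OF Ssg_m]] .
lemma Tm_add: "0 \<le> s \<Longrightarrow> y \<in> V m \<Longrightarrow> z \<in> V m \<Longrightarrow> Tm m s (y + z) = Tm m s y + Tm m s z"
  using c0V.T_add[OF sgV.axioms(1)[OF Tsg_m]] .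
lemma Sm_add: "0 \<le> s \<Longrightarrow> y \<in> V m \<Longrightarrow> z \<in> V m \<Longrightarrow> Sm m s (y + z) = Sm m s y + Sm m s z"
  using c0V.T_add[OF sgV.axioms(1)[OF Ssg_m]] .
lemma Tm_diff: "0 \<le> s \<Longrightarrow> y \<in> V m \<Longrightarrow> z \<in> V m \<Longrightarrow> Tm m s (y - z) = Tm m s y - Tm m s z"
  using c0V.T_diff[OF sgV.axioms(1)[OF Tsg_m]] .
lemma Sm_diff: "0 \<le> s \<Longrightarrow> y \<in> V m \<Longrightarrow> z \<in> V m \<Longrightarrow> Sm m s (y - z) = Sm m s y - Sm m s z"
  using c0V.T_diff[OF sgV.axioms(1)[OF Ssg_m]] .
lemma Tm_scale: "0 \<le> s \<Longrightarrow> y \<in> V m \<Longrightarrow> Tm m s (c *\<^sub>R y) = c *\<^sub>R Tm m s y"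
  using c0V.T_scale[OF sgV.axioms(1)[OF Tsg_m]] .
lemma Sm_scale: "0 \<le> s \<Longrightarrow> y \<in> V m \<Longrightarrow> Sm m s (c *\<^sub>R y) = c *\<^sub>R Sm m s y"
  using c0V.T_scale[OF sgV.axioms(1)[OF Ssg_m]] .
lemma Tm_sg: "0 \<le> s \<Longrightarrow> 0 \<le> r \<Longrightarrow> y \<in> V m \<Longrightarrow> Tm m (s + r) y = Tm m s (Tm m r y)"
  using c0V.Tsg[OF sgV.axioms(1)[OF Tsg_m]] .
lemma subV: "subspace (V m)" by (rule TA.subV)
lemma V_diff: "y \<in> V m \<Longrightarrow> z \<in> V m \<Longrightarrow> y - z \<in> V m" using subV subspace_diff by blast
lemma V_add: "y \<in> V m \<Longrightarrow> z \<in> V m \<Longrightarrow> y + z \<in> V m" using subV subspace_add by blast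
lemma V_scale: "y \<in> V m \<Longrightarrow> c *\<^sub>R y \<in> V m" using subV subspace_scale by blast

lemma Fm_in: "0 \<le> \<tau> \<Longrightarrow> y \<in> V m \<Longrightarrow> Fm m \<tau> y \<in> V m"
  unfolding Fm_def by (simp add: Tm_in Sm_in)
lemma Fm_add: "0 \<le> \<tau> \<Longrightarrow> y \<in> V m \<Longrightarrow> z \<in> V m \<Longrightarrow> Fm m \<tau> (y + z) = Fm m \<tau> y + Fm m \<tau> z"
  unfolding Fm_def by (simp add: Tm_in Sm_in Tm_add Sm_add)
lemma Fm_scale: "0 \<le> \<tau> \<Longrightarrow> y \<in> V m \<Longrightarrow> Fm m \<tau> (c *\<^sub>R y) = c *\<^sub>R Fm m \<tau> y"
  unfolding Fm_def by (simp add: Tm_in Sm_in Tm_scale Sm_scale)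

definition "KF = KT * KT * KS * M"
definition "\<omega>F = \<bar>\<omega>\<bar>"

lemma KF1: "KF \<ge> 1"
proof -
  have "KT * KT \<ge> 1" using TA.KB1 by (metis mult_mono' order_trans mult_1_left zero_le_one)
  moreover have "KS * M \<ge> 1" using SB.KB1 Sseq(1) by (metis mult_mono' order_trans mult_1_left zero_le_one)
  ultimately have "(KT * KT) * (KS * M) \<ge> 1" by (metis mult_mono' order_trans mult_1_left zero_le_one)
  then show ?thesis by (simp add: KF_def mult.assoc)
qed

lemma \<omega>F0: "\<omega>F \<ge> 0" by (simp add: \<omega>F_def)

lemma Fm_pow_eq:
  assumes t: "0 < \<tau>" and y: "y \<in> V m"
  shows "(Fm m \<tau> ^^ Suc k) y = Tm m (\<tau>/2) (((\<lambda>z. Sm m \<tau> (Tm m \<tau> z)) ^^ k) (Sm m \<tau> (Tm m (\<tau>/2) y)))"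
proof (induction k)
  case 0 then show ?case by (simp add: Fm_def)
next
  case (Suc k)
  let ?\<psi> = "\<lambda>z. Sm m \<tau> (Tm m \<tau> z)"
  have psiV: "\<And>j z. z \<in> V m \<Longrightarrow> (?\<psi> ^^ j) z \<in> V m"
  proof -
    fix j z assume "z \<in> V m" then show "(?\<psi> ^^ j) z \<in> V m" using t by (induction j) (auto simp: Tm_in Sm_in)
  qed
  let ?z = "(?\<psi> ^^ k) (Sm m \<tau> (Tm m (\<tau>/2) y))"
  have zV: "?z \<in> V m" using psiV y t by (simp add: Tm_in Sm_in)
  have "(Fm m \<tau> ^^ Suc (Suc k)) y = Fm m \<tau> (Tm m (\<tau>/2) ?z)" using Suc by simp
  also have "\<dots> = Tm m (\<tau>/2) (Sm m \<tau> (Tm m (\<tau>/2 + \<tau>/2) ?z))"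
    unfolding Fm_def using Tm_sg[of "\<tau>/2" "\<tau>/2" ?z m] zV t by simp
  also have "\<dots> = Tm m (\<tau>/2) ((?\<psi> ^^ Suc k) (Sm m \<tau> (Tm m (\<tau>/2) y)))" by simp
  finally show ?case .
qed

lemma Fm_pow:
  assumes t: "0 < \<tau>" "\<tau> \<le> 1" and y: "y \<in> V m"
  shows "norm ((Fm m \<tau> ^^ k) y) \<le> KF * exp (\<omega>F * \<tau>) ^ k * norm y"
proof (cases k)
  case 0
  then show ?thesis using KF1 by (simp add: mult_le_cancel_right1)
next
  case (Suc j)
  let ?\<psi> = "\<lambda>z. Sm m \<tau> (Tm m \<tau> z)"
  have e1: "exp (\<omega>F * \<tau>) \<ge> 1" using \<omega>F0 t by simp
  have v1: "Tm m (\<tau>/2) y \<in> V m" "Sm m \<tau> (Tm m (\<tau>/2) y) \<in> V m" using y t by (auto simp: Tm_in Sm_in)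
  have psi: "norm ((?\<psi> ^^ j) z) \<le> M * exp (\<omega>F * \<tau>) ^ j * norm z" if z: "z \<in> V m" for z
  proof -
    have "norm ((?\<psi> ^^ j) z) \<le> M * exp (real j * \<omega> * \<tau>) * norm z"
      using Sseq(2)[of \<tau> 1 z m j] t z by simp
    also have "exp (real j * \<omega> * \<tau>) \<le> exp (\<omega>F * \<tau>) ^ j"
    proof -
      have "real j * \<omega> * \<tau> \<le> real j * (\<omega>F * \<tau>)" using t unfolding \<omega>F_def
        by (simp add: mult.assoc mult_left_mono mult_right_mono)
      then show ?thesis by (simp add: exp_of_nat_mult[symmetric])
    qed
    then have "M * exp (real j * \<omega> * \<tau>) * norm z \<le> M * exp (\<omega>F * \<tau>) ^ j * norm z"
      using Sseq(1) by (intro mult_right_mono mult_left_mono) auto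
    finally show ?thesis .
  qed
  have "norm ((Fm m \<tau> ^^ k) y) = norm (Tm m (\<tau>/2) ((?\<psi> ^^ j) (Sm m \<tau> (Tm m (\<tau>/2) y))))"
    using Fm_pow_eq[OF t(1) y] Suc by simp
  also have "\<dots> \<le> KT * norm ((?\<psi> ^^ j) (Sm m \<tau> (Tm m (\<tau>/2) y)))"
  proof -
    have psiV: "\<And>z. z \<in> V m \<Longrightarrow> (?\<psi> ^^ j) z \<in> V m"
    proof -
      fix z assume "z \<in> V m" then show "(?\<psi> ^^ j) z \<in> V m" using t by (induction j) (auto simp: Tm_in Sm_in)
    qed
    show ?thesis by (rule TA.T_bnd1) (use t psiV[OF v1(2)] in auto)
  qed
  also have "\<dots> \<le> KT * (M * exp (\<omega>F * \<tau>) ^ j * norm (Sm m \<tau> (Tm m (\<tau>/2) y)))"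
    using psi[OF v1(2)] TA.KB1 by (intro mult_left_mono) auto
  also have "\<dots> \<le> KT * (M * exp (\<omega>F * \<tau>) ^ j * (KS * (KT * norm y)))"
  proof -
    have "norm (Sm m \<tau> (Tm m (\<tau>/2) y)) \<le> KS * norm (Tm m (\<tau>/2) y)" by (rule SB.T_bnd1) (use t v1 in auto)
    also have "\<dots> \<le> KS * (KT * norm y)" using TA.T_bnd1[of "\<tau>/2" y m] t y SB.KB1 by (intro mult_left_mono) auto
    finally have "norm (Sm m \<tau> (Tm m (\<tau>/2) y)) \<le> KS * (KT * norm y)" .
    moreover have "0 \<le> M * exp (\<omega>F * \<tau>) ^ j" using Sseq(1) by simp
    ultimately show ?thesis using TA.KB1 by (intro mult_left_mono) auto
  qed
  also have "\<dots> = KF * exp (\<omega>F * \<tau>) ^ j * norm y" by (simp add: KF_def algebra_simps)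
  also have "\<dots> \<le> KF * exp (\<omega>F * \<tau>) ^ k * norm y"
    using Suc e1 KF1 by (intro mult_right_mono mult_left_mono) auto
  finally show ?thesis .
qed

lemma disc_m: "0 < \<tau> \<Longrightarrow> \<tau> \<le> 1 \<Longrightarrow> disc (V m) (Fm m \<tau>) \<tau> KF \<omega>F"
  by unfold_locales (use V_sub Fm_in Fm_add Fm_scale Fm_pow KF1 \<omega>F0 in auto)

definition "lamF = disc.lam \<omega>F"
definition "Rm m \<tau> = disc.Rs (Fm m \<tau>) \<tau> \<omega>F"

lemma R_props:
  assumes t: "0 < \<tau>" "\<tau> \<le> 1"
  shows "\<And>y. y \<in> V m \<Longrightarrow> Rm m \<tau> y \<in> V m"
    and "\<And>y. y \<in> V m \<Longrightarrow> norm (Rm m \<tau> y) \<le> KF * norm y"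
    and "\<And>y z. y \<in> V m \<Longrightarrow> z \<in> V m \<Longrightarrow> Rm m \<tau> (y - z) = Rm m \<tau> y - Rm m \<tau> z"
    and "\<And>y c. y \<in> V m \<Longrightarrow> Rm m \<tau> (c *\<^sub>R y) = c *\<^sub>R Rm m \<tau> y"
    and "\<And>y z. y \<in> V m \<Longrightarrow> z \<in> V m \<Longrightarrow>
       Rm m \<tau> (lamF *\<^sub>R y - z) - y = Rm m \<tau> ((1 / \<tau>) *\<^sub>R (Fm m \<tau> y - y) - z)"
    and "\<And>y. y \<in> V m \<Longrightarrow> Fm m \<tau> (Rm m \<tau> y) - Rm m \<tau> y = \<tau> *\<^sub>R (lamF *\<^sub>R Rm m \<tau> y - y)"
    and "\<And>y j. y \<in> V m \<Longrightarrow> Rm m \<tau> ((Fm m \<tau> ^^ j) y) = (Fm m \<tau> ^^ j) (Rm m \<tau> y)"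
    and "\<And>y z. y \<in> V m \<Longrightarrow> z \<in> V m \<Longrightarrow> Rm m \<tau> (y + z) = Rm m \<tau> y + Rm m \<tau> z"
proof -
  interpret disc "V m" "Fm m \<tau>" \<tau> KF \<omega>F by (rule disc_m[OF t])
  show "\<And>y. y \<in> V m \<Longrightarrow> Rm m \<tau> y \<in> V m" unfolding Rm_def by (rule Rs_in)
  show "\<And>y. y \<in> V m \<Longrightarrow> norm (Rm m \<tau> y) \<le> KF * norm y" unfolding Rm_def by (rule Rs_bnd)
  show "\<And>y z. y \<in> V m \<Longrightarrow> z \<in> V m \<Longrightarrow> Rm m \<tau> (y - z) = Rm m \<tau> y - Rm m \<tau> z" unfolding Rm_def by (rule Rs_diff)
  show "\<And>y c. y \<in> V m \<Longrightarrow> Rm m \<tau> (c *\<^sub>R y) = c *\<^sub>R Rm m \<tau> y" unfolding Rm_def by (rule Rs_scale)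
  show "\<And>y z. y \<in> V m \<Longrightarrow> z \<in> V m \<Longrightarrow>
       Rm m \<tau> (lamF *\<^sub>R y - z) - y = Rm m \<tau> ((1 / \<tau>) *\<^sub>R (Fm m \<tau> y - y) - z)"
    unfolding Rm_def lamF_def by (rule Rs_key)
  show "\<And>y. y \<in> V m \<Longrightarrow> Fm m \<tau> (Rm m \<tau> y) - Rm m \<tau> y = \<tau> *\<^sub>R (lamF *\<^sub>R Rm m \<tau> y - y)"
    unfolding Rm_def lamF_def by (rule Rs_eq)
  show "\<And>y j. y \<in> V m \<Longrightarrow> Rm m \<tau> ((Fm m \<tau> ^^ j) y) = (Fm m \<tau> ^^ j) (Rm m \<tau> y)"
    unfolding Rm_def by (rule Rs_Fk)
  show "\<And>y z. y \<in> V m \<Longrightarrow> z \<in> V m \<Longrightarrow> Rm m \<tau> (y + z) = Rm m \<tau> y + Rm m \<tau> z" unfolding Rm_def by (rule Rs_add)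
qed

lemma Fk_props:
  assumes t: "0 < \<tau>" "\<tau> \<le> 1"
  shows "\<And>y k. y \<in> V m \<Longrightarrow> (Fm m \<tau> ^^ k) y \<in> V m"
    and "\<And>y z k. y \<in> V m \<Longrightarrow> z \<in> V m \<Longrightarrow> (Fm m \<tau> ^^ k) (y - z) = (Fm m \<tau> ^^ k) y - (Fm m \<tau> ^^ k) z"
proof -
  interpret disc "V m" "Fm m \<tau>" \<tau> KF \<omega>F by (rule disc_m[OF t])
  show "\<And>y k. y \<in> V m \<Longrightarrow> (Fm m \<tau> ^^ k) y \<in> V m" by (rule Fk_in)
  show "\<And>y z k. y \<in> V m \<Longrightarrow> z \<in> V m \<Longrightarrow> (Fm m \<tau> ^^ k) (y - z) = (Fm m \<tau> ^^ k) y - (Fm m \<tau> ^^ k) z"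
    by (rule Fk_diff)
qed

lemma lamF1: "lamF \<ge> 1"
proof -
  interpret disc "V 0" "Fm 0 1" 1 KF \<omega>F by (rule disc_m) auto
  show ?thesis using lam_pos unfolding lamF_def .
qed

lemma STR:
  assumes dA: "d \<in> DA" and dB: "d \<in> DB" and e: "e > 0"
  shows "eventually (\<lambda>p. norm ((1/fst p) *\<^sub>R (Fm (snd p) (fst p) (P (snd p) d) - P (snd p) d)
            - P (snd p) (A d + B d)) \<le> e) FF"
proof -
  define Cst where "Cst = 2 + 2 * KT + KT * KS"
  have KT1: "KT \<ge> 1" and KS1: "KS \<ge> 1" using TA.KB1 SB.KB1 .
  have KTKS: "KT * KS \<ge> 1" using KT1 KS1 by (metis mult_mono' order_trans mult_1_left zero_le_one)
  have Cpos: "Cst > 0" using KT1 KTKS by (simp add: Cst_def)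
  define e1 where "e1 = e / Cst"
  have e1: "e1 > 0" using e Cpos by (simp add: e1_def)
  define Q1 where "Q1 = (\<lambda>h m. P m d \<in> DAm m \<and> norm ((1/h) *\<^sub>R (Tm m h (P m d) - P m d) - P m (A d)) \<le> e1)"
  have "eventually (\<lambda>p. Q1 (fst p) (snd p)) FF" using TA.CONS[OF dA e1] unfolding Q1_def by simp
  then have E1: "eventually (\<lambda>p. Q1 (fst p / 2) (snd p)) FF" by (rule ev_half)
  define Q2 where "Q2 = (\<lambda>h m. P m d \<in> DBm m \<and> norm ((1/h) *\<^sub>R (Sm m h (P m d) - P m d) - P m (B d)) \<le> e1)"
  have E2: "eventually (\<lambda>p. Q2 (fst p) (snd p)) FF" using SB.CONS[OF dB e1] unfolding Q2_def by simp
  have E3: "eventually (\<lambda>p. \<forall>s\<in>{0..fst p}. norm (Tm (snd p) s (P (snd p) (A d)) - P (snd p) (A d)) \<le> e1) FF"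
    by (rule TA.Z[OF e1])
  have E4: "eventually (\<lambda>p. \<forall>s\<in>{0..fst p}. norm (Sm (snd p) s (P (snd p) (A d)) - P (snd p) (A d)) \<le> e1) FF"
    by (rule SB.Z[OF e1])
  have E5: "eventually (\<lambda>p. \<forall>s\<in>{0..fst p}. norm (Tm (snd p) s (P (snd p) (B d)) - P (snd p) (B d)) \<le> e1) FF"
    by (rule TA.Z[OF e1])
  show ?thesis using E1 E2 E3 E4 E5 TA.ev_small[OF zero_less_one]
  proof eventually_elim
    case (elim p)
    define \<tau> where "\<tau> = fst p"
    define m where "m = snd p"
    define h where "h = \<tau> / 2"
    define y where "y = P m d"
    define \<alpha> where "\<alpha> = P m (A d)"
    define \<beta> where "\<beta> = P m (B d)"
    define a where "a = (1/h) *\<^sub>R (Tm m h y - y)"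
    define b where "b = (1/\<tau>) *\<^sub>R (Sm m \<tau> y - y)"
    have t: "0 < \<tau>" "\<tau> < 1" using elim by (auto simp: \<tau>_def)
    have h: "0 < h" "h \<le> 1" "h \<le> \<tau>" using t by (auto simp: h_def)
    have yV: "y \<in> V m" and \<alpha>V: "\<alpha> \<in> V m" and \<beta>V: "\<beta> \<in> V m" by (auto simp: y_def \<alpha>_def \<beta>_def TA.P_in)
    have aV: "a \<in> V m" using yV h by (auto simp: a_def intro!: V_scale V_diff Tm_in)
    have bV: "b \<in> V m" using yV t by (auto simp: b_def intro!: V_scale V_diff Sm_in)
    have na: "norm (a - \<alpha>) \<le> e1" using elim(1) unfolding Q1_def a_def \<alpha>_def y_def h_def \<tau>_def m_def by simp
    have nb: "norm (b - \<beta>) \<le> e1" using elim(2) unfolding Q2_def b_def \<beta>_def y_def \<tau>_def m_def by simp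
    have z3: "norm (Tm m h \<alpha> - \<alpha>) \<le> e1" using elim(3) h unfolding \<alpha>_def m_def \<tau>_def by auto
    have z4: "norm (Sm m \<tau> \<alpha> - \<alpha>) \<le> e1" using elim(4) t unfolding \<alpha>_def m_def \<tau>_def by auto
    have z5: "norm (Tm m h \<beta> - \<beta>) \<le> e1" using elim(5) h unfolding \<beta>_def m_def \<tau>_def by auto
    have Ty: "Tm m h y = y + h *\<^sub>R a" using h by (simp add: a_def)
    have Sy: "Sm m \<tau> y = y + \<tau> *\<^sub>R b" using t by (simp add: b_def)
    have SaV: "Sm m \<tau> a \<in> V m" using aV t by (simp add: Sm_in)
    have "Sm m \<tau> (Tm m h y) = y + \<tau> *\<^sub>R b + h *\<^sub>R Sm m \<tau> a"
      unfolding Ty using Sm_add[of \<tau> y m "h *\<^sub>R a"] Sm_scale[of \<tau> a m h] Sy yV aV t V_scale by simp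
    then have "Fm m \<tau> y = Tm m h (y + \<tau> *\<^sub>R b + h *\<^sub>R Sm m \<tau> a)" by (simp add: Fm_def h_def)
    also have "\<dots> = Tm m h y + \<tau> *\<^sub>R Tm m h b + h *\<^sub>R Tm m h (Sm m \<tau> a)"
      using Tm_add[of h "y + \<tau> *\<^sub>R b" m "h *\<^sub>R Sm m \<tau> a"] Tm_add[of h y m "\<tau> *\<^sub>R b"]
        Tm_scale[of h b m \<tau>] Tm_scale[of h "Sm m \<tau> a" m h] yV bV SaV h V_scale V_add by simp
    finally have Fy: "Fm m \<tau> y - y = h *\<^sub>R a + \<tau> *\<^sub>R Tm m h b + h *\<^sub>R Tm m h (Sm m \<tau> a)"
      unfolding Ty by simp
    have ht: "(1/\<tau>) * h = 1/2" using t by (simp add: h_def)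
    have main: "(1/\<tau>) *\<^sub>R (Fm m \<tau> y - y) - (\<alpha> + \<beta>) =
       (1/2) *\<^sub>R (a - \<alpha>) + (Tm m h b - \<beta>) + (1/2) *\<^sub>R (Tm m h (Sm m \<tau> a) - \<alpha>)"
    proof -
      have h\<alpha>: "(1/2) *\<^sub>R \<alpha> + (1/2) *\<^sub>R \<alpha> = \<alpha>" by (simp add: scaleR_add_left[symmetric])
      show ?thesis unfolding Fy using t ht h\<alpha> by (simp add: scaleR_add_right scaleR_diff_right algebra_simps)
    qed
    have N2: "norm (Tm m h b - \<beta>) \<le> KT * e1 + e1"
    proof -
      have eq: "Tm m h b - \<beta> = Tm m h (b - \<beta>) + (Tm m h \<beta> - \<beta>)" using Tm_diff[of h b m \<beta>] h bV \<beta>V by simp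
      have "norm (Tm m h (b - \<beta>)) \<le> KT * norm (b - \<beta>)"
        using TA.T_bnd1[of h "b - \<beta>" m] h bV \<beta>V V_diff by simp
      also have "\<dots> \<le> KT * e1" using nb KT1 by (intro mult_left_mono) auto
      finally have "norm (Tm m h (b - \<beta>)) \<le> KT * e1" .
      then show ?thesis unfolding eq using z5 by (intro order_trans[OF norm_triangle_ineq] add_mono)
    qed
    have N3: "norm (Tm m h (Sm m \<tau> a) - \<alpha>) \<le> KT * KS * e1 + KT * e1 + e1"
    proof -
      have SaaV: "Sm m \<tau> \<alpha> \<in> V m" using \<alpha>V t by (simp add: Sm_in)
      have eq: "Tm m h (Sm m \<tau> a) - \<alpha> = Tm m h (Sm m \<tau> (a - \<alpha>)) + Tm m h (Sm m \<tau> \<alpha> - \<alpha>) + (Tm m h \<alpha> - \<alpha>)"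
        using Sm_diff[of \<tau> a m \<alpha>] Tm_diff[of h "Sm m \<tau> a" m "Sm m \<tau> \<alpha>"] Tm_diff[of h "Sm m \<tau> \<alpha>" m \<alpha>]
          aV \<alpha>V SaV SaaV t h by simp
      moreover have "norm (Tm m h (Sm m \<tau> (a - \<alpha>))) \<le> KT * KS * e1"
      proof -
        have "norm (Tm m h (Sm m \<tau> (a - \<alpha>))) \<le> KT * norm (Sm m \<tau> (a - \<alpha>))"
          by (rule TA.T_bnd1) (use h t aV \<alpha>V V_diff Sm_in in auto)
        also have "\<dots> \<le> KT * (KS * norm (a - \<alpha>))"
          using SB.T_bnd1[of \<tau> "a - \<alpha>" m] t aV \<alpha>V V_diff KT1 by (intro mult_left_mono) auto
        also have "\<dots> \<le> KT * (KS * e1)" using na KT1 KS1 by (intro mult_left_mono) auto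
        finally show ?thesis by (simp add: mult.assoc)
      qed
      moreover have "norm (Tm m h (Sm m \<tau> \<alpha> - \<alpha>)) \<le> KT * e1"
      proof -
        have "norm (Tm m h (Sm m \<tau> \<alpha> - \<alpha>)) \<le> KT * norm (Sm m \<tau> \<alpha> - \<alpha>)"
          by (rule TA.T_bnd1) (use h SaaV \<alpha>V V_diff in auto)
        also have "\<dots> \<le> KT * e1" using z4 KT1 by (intro mult_left_mono) auto
        finally show ?thesis .
      qed
      ultimately show ?thesis unfolding eq using z3
        by (intro order_trans[OF norm_triangle_ineq] add_mono order_trans[OF norm_triangle_ineq])
    qed
    have "norm ((1/\<tau>) *\<^sub>R (Fm m \<tau> y - y) - (\<alpha> + \<beta>)) \<le>
       (1/2) * norm (a - \<alpha>) + norm (Tm m h b - \<beta>) + (1/2) * norm (Tm m h (Sm m \<tau> a) - \<alpha>)"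
      unfolding main using norm_triangle_ineq[of "(1/2) *\<^sub>R (a - \<alpha>) + (Tm m h b - \<beta>)" "(1/2) *\<^sub>R (Tm m h (Sm m \<tau> a) - \<alpha>)"]
        norm_triangle_ineq[of "(1/2) *\<^sub>R (a - \<alpha>)" "Tm m h b - \<beta>"] by simp
    also have "\<dots> \<le> (1/2) * e1 + (KT * e1 + e1) + (1/2) * (KT * KS * e1 + KT * e1 + e1)"
      using na N2 N3 by (intro add_mono mult_left_mono) auto
    also have "\<dots> \<le> Cst * e1"
    proof -
      have p: "KT * e1 \<ge> 0" "KT * KS * e1 \<ge> 0" using KT1 KTKS e1 by auto
      have "(1/2) * e1 + (KT * e1 + e1) + (1/2) * (KT * KS * e1 + KT * e1 + e1) = 2 * e1 + (3/2) * (KT * e1) + (1/2) * (KT * KS * e1)"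
        by (simp add: algebra_simps)
      moreover have "Cst * e1 = 2 * e1 + 2 * (KT * e1) + KT * KS * e1" by (simp add: Cst_def algebra_simps)
      ultimately show ?thesis using p by linarith
    qed
    also have "\<dots> = e" using Cpos by (simp add: e1_def)
    finally have "norm ((1/\<tau>) *\<^sub>R (Fm m \<tau> y - y) - (\<alpha> + \<beta>)) \<le> e" .
    then show ?case unfolding \<tau>_def m_def y_def \<alpha>_def \<beta>_def by (simp add: TA.P_add)
  qed
qed

lemma C_on_D: "d \<in> DA \<Longrightarrow> d \<in> DB \<Longrightarrow> d \<in> DC \<and> C d = A d + B d"
proof -
  assume "d \<in> DA" "d \<in> DB"
  then have "(d, A d + B d) \<in> graph_of (DA \<inter> DB) (\<lambda>x. A x + B x)" by (auto simp: graph_of_def)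
  then have "(d, A d + B d) \<in> graph_of DC C"
    using C_closure closure_subset unfolding is_operator_closure_def by blast
  then show ?thesis by (auto simp: graph_of_def)
qed

lemma graph_approx:
  assumes u: "u \<in> DC" and eta: "\<eta> > 0"
  obtains d where "d \<in> DA" "d \<in> DB" "norm (u - d) < \<eta>" "norm (C u - C d) < \<eta>"
proof -
  have "(u, C u) \<in> graph_of DC C" using u by (auto simp: graph_of_def)
  then have "(u, C u) \<in> closure (graph_of (DA \<inter> DB) (\<lambda>x. A x + B x))"
    using C_closure unfolding is_operator_closure_def by simp
  then obtain g where g: "g \<in> graph_of (DA \<inter> DB) (\<lambda>x. A x + B x)" "dist g (u, C u) < \<eta>"
    using eta unfolding closure_approachable by blast
  then obtain d where d: "g = (d, A d + B d)" "d \<in> DA" "d \<in> DB" by (auto simp: graph_of_def)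
  have Cd: "C d = A d + B d" using C_on_D d by blast
  have "dist d u < \<eta>" using dist_fst_le[of g "(u, C u)"] g d by simp
  moreover have "dist (C d) (C u) < \<eta>" using dist_snd_le[of g "(u, C u)"] g d Cd by simp
  ultimately show ?thesis using that d by (simp add: dist_norm norm_minus_commute)
qed

lemma RC:
  assumes u: "u \<in> DC" and e: "e > 0"
  shows "eventually (\<lambda>p. norm (Rm (snd p) (fst p) (P (snd p) (lamF *\<^sub>R u - C u)) - P (snd p) u) \<le> e) FF"
proof -
  define L where "L = KF * MP' * (lamF + 1) + MP'"
  have L0: "L \<ge> 0" using KF1 lamF1 TA.MP'0 by (simp add: L_def)
  define \<eta> where "\<eta> = e / (2 * (L + 1))"
  have eta: "\<eta> > 0" using e L0 by (simp add: \<eta>_def)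
  obtain d where d: "d \<in> DA" "d \<in> DB" "norm (u - d) < \<eta>" "norm (C u - C d) < \<eta>"
    using graph_approx[OF u eta] by blast
  have Cd: "C d = A d + B d" using C_on_D d by blast
  have e2: "e / (2 * KF) > 0" using e KF1 by simp
  show ?thesis using STR[OF d(1,2) e2] TA.ev_small[OF zero_less_one]
  proof eventually_elim
    case (elim p)
    define \<tau> where "\<tau> = fst p"
    define m where "m = snd p"
    have t: "0 < \<tau>" "\<tau> \<le> 1" using elim by (auto simp: \<tau>_def)
    note R = R_props[OF t, where m=m]
    have PdV: "P m d \<in> V m" "P m (C d) \<in> V m" by (auto simp: TA.P_in)
    define w where "w = lamF *\<^sub>R (u - d) - (C u - C d)"
    have wV: "P m w \<in> V m" by (simp add: TA.P_in)
    have Pv: "P m (lamF *\<^sub>R u - C u) = (lamF *\<^sub>R P m d - P m (C d)) + P m w"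
      unfolding w_def by (simp add: TA.P_add TA.P_diff TA.P_scale algebra_simps)
    have v1V: "lamF *\<^sub>R P m d - P m (C d) \<in> V m" using PdV V_scale V_diff by blast
    have split: "Rm m \<tau> (P m (lamF *\<^sub>R u - C u)) - P m u =
       (Rm m \<tau> (lamF *\<^sub>R P m d - P m (C d)) - P m d) + (Rm m \<tau> (P m w) - P m (u - d))"
      unfolding Pv using R(8)[OF v1V wV] by (simp add: TA.P_diff algebra_simps)
    have FdV: "(1 / \<tau>) *\<^sub>R (Fm m \<tau> (P m d) - P m d) - P m (C d) \<in> V m"
      using PdV t Fm_in V_diff V_scale by auto
    have n1: "norm (Rm m \<tau> (lamF *\<^sub>R P m d - P m (C d)) - P m d) \<le> e / 2"
    proof -
      have "norm (Rm m \<tau> (lamF *\<^sub>R P m d - P m (C d)) - P m d) =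
          norm (Rm m \<tau> ((1 / \<tau>) *\<^sub>R (Fm m \<tau> (P m d) - P m d) - P m (C d)))"
        using R(5)[OF PdV] by simp
      also have "\<dots> \<le> KF * norm ((1 / \<tau>) *\<^sub>R (Fm m \<tau> (P m d) - P m d) - P m (C d))" by (rule R(2)[OF FdV])
      also have "\<dots> \<le> KF * (e / (2 * KF))" using elim Cd KF1 unfolding \<tau>_def m_def by (intro mult_left_mono) auto
      also have "\<dots> = e / 2" using KF1 by simp
      finally show ?thesis .
    qed
    have n2: "norm (Rm m \<tau> (P m w) - P m (u - d)) \<le> e / 2"
    proof -
      have "norm w \<le> lamF * norm (u - d) + norm (C u - C d)" unfolding w_def
        using norm_triangle_ineq4[of "lamF *\<^sub>R (u - d)" "C u - C d"] lamF1 by simp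
      also have "\<dots> \<le> lamF * \<eta> + \<eta>" using d lamF1 by (intro add_mono mult_left_mono) auto
      finally have nw: "norm w \<le> (lamF + 1) * \<eta>" by (simp add: algebra_simps)
      have "norm (Rm m \<tau> (P m w) - P m (u - d)) \<le> norm (Rm m \<tau> (P m w)) + norm (P m (u - d))"
        by (rule norm_triangle_ineq4)
      also have "\<dots> \<le> KF * (MP' * norm w) + MP' * norm (u - d)"
      proof (rule add_mono)
        show "norm (Rm m \<tau> (P m w)) \<le> KF * (MP' * norm w)"
          using R(2)[OF wV] mult_left_mono[OF TA.P_norm[of m w], of KF] KF1 by linarith
        show "norm (P m (u - d)) \<le> MP' * norm (u - d)" by (rule TA.P_norm)
      qed
      also have "\<dots> \<le> KF * (MP' * ((lamF + 1) * \<eta>)) + MP' * \<eta>"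
        using nw d TA.MP'0 KF1 by (intro add_mono mult_left_mono) auto
      also have "\<dots> = L * \<eta>" by (simp add: L_def algebra_simps)
      also have "\<dots> \<le> e / 2" unfolding \<eta>_def using L0 e by (simp add: field_simps)
      finally show ?thesis .
    qed
    have "norm (Rm m \<tau> (P m (lamF *\<^sub>R u - C u)) - P m u) \<le> e"
      unfolding split using n1 n2 by (intro order_trans[OF norm_triangle_ineq]) (simp add: field_sum_of_halves[symmetric] add_mono)
    then show ?case by (simp add: \<tau>_def m_def)
  qed
qed

definition "Qf m \<tau> u cu = Rm m \<tau> (P m (lamF *\<^sub>R u - cu)) - P m u"

lemma QLIP:
  assumes t: "0 < \<tau>" "\<tau> \<le> 1"
  shows "norm (Qf m \<tau> u cu - Qf m \<tau> u' cu') \<le> KF * MP' * (lamF * norm (u - u') + norm (cu - cu')) + MP' * norm (u - u')"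
proof -
  note R = R_props[OF t, where m=m]
  define w where "w = lamF *\<^sub>R (u - u') - (cu - cu')"
  have eq: "Qf m \<tau> u cu - Qf m \<tau> u' cu' = Rm m \<tau> (P m w) - P m (u - u')"
  proof -
    have "P m (lamF *\<^sub>R u - cu) = P m (lamF *\<^sub>R u' - cu') + P m w"
      unfolding w_def by (simp add: TA.P_add TA.P_diff TA.P_scale algebra_simps)
    then have "Rm m \<tau> (P m (lamF *\<^sub>R u - cu)) = Rm m \<tau> (P m (lamF *\<^sub>R u' - cu')) + Rm m \<tau> (P m w)"
      using R(8) TA.P_in by simp
    then show ?thesis unfolding Qf_def by (simp add: TA.P_diff algebra_simps)
  qed
  have wV: "P m w \<in> V m" by (simp add: TA.P_in)
  have nw: "norm w \<le> lamF * norm (u - u') + norm (cu - cu')" unfolding w_def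
    using norm_triangle_ineq4[of "lamF *\<^sub>R (u - u')" "cu - cu'"] lamF1 by simp
  have "norm (Rm m \<tau> (P m w) - P m (u - u')) \<le> norm (Rm m \<tau> (P m w)) + norm (P m (u - u'))"
    by (rule norm_triangle_ineq4)
  also have "\<dots> \<le> KF * (MP' * norm w) + MP' * norm (u - u')"
  proof (rule add_mono)
    show "norm (Rm m \<tau> (P m w)) \<le> KF * (MP' * norm w)"
      using R(2)[OF wV] mult_left_mono[OF TA.P_norm[of m w], of KF] KF1 by linarith
    show "norm (P m (u - u')) \<le> MP' * norm (u - u')" by (rule TA.P_norm)
  qed
  also have "\<dots> \<le> KF * (MP' * (lamF * norm (u - u') + norm (cu - cu'))) + MP' * norm (u - u')"
    using nw TA.MP'0 KF1 by (intro add_mono mult_left_mono) auto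
  finally show ?thesis unfolding eq by (simp add: mult.assoc)
qed

lemma URC:
  assumes x: "x \<in> DC" and t: "0 \<le> t" and e: "e > 0"
  shows "eventually (\<lambda>p. \<forall>a\<in>{0..t}. norm (Qf (snd p) (fst p) (U a x) (U a (C x))) \<le> e) FF"
proof -
  define L where "L = KF * MP' * (lamF + 1) + MP'"
  have L0: "L \<ge> 0" using KF1 lamF1 TA.MP'0 by (simp add: L_def)
  define \<eta> where "\<eta> = e / (2 * (L + 1))"
  have eta: "\<eta> > 0" using e L0 by (simp add: \<eta>_def)
  have uc1: "uniformly_continuous_on {0..t} (\<lambda>a. U a x)"
    using continuous_on_subset[OF UU.Tcont[of x]] by (intro compact_uniformly_continuous) auto
  have uc2: "uniformly_continuous_on {0..t} (\<lambda>a. U a (C x))"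
    using continuous_on_subset[OF UU.Tcont[of "C x"]] by (intro compact_uniformly_continuous) auto
  obtain d1 where d1: "d1 > 0" "\<And>a a'. a \<in> {0..t} \<Longrightarrow> a' \<in> {0..t} \<Longrightarrow> dist a' a < d1 \<Longrightarrow> dist (U a' x) (U a x) < \<eta>"
    using uc1 eta unfolding uniformly_continuous_on_def by metis
  obtain d2 where d2: "d2 > 0" "\<And>a a'. a \<in> {0..t} \<Longrightarrow> a' \<in> {0..t} \<Longrightarrow> dist a' a < d2 \<Longrightarrow> dist (U a' (C x)) (U a (C x)) < \<eta>"
    using uc2 eta unfolding uniformly_continuous_on_def by metis
  define \<delta> where "\<delta> = min d1 d2"
  have \<delta>: "\<delta> > 0" using d1 d2 by (simp add: \<delta>_def)
  obtain G where G: "G \<subseteq> {0..t}" "finite G" "{0..t} \<subseteq> (\<Union>g\<in>G. ball g \<delta>)"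
  proof -
    have cov: "{0..t} \<subseteq> (\<Union>c\<in>{0..t}. ball c \<delta>)" using \<delta> by force
    show ?thesis using compactE_image[OF compact_Icc _ cov] that by auto
  qed
  have xa: "\<And>a. 0 \<le> a \<Longrightarrow> U a x \<in> DC \<and> C (U a x) = U a (C x)" using UU.D_inv[OF x] by blast
  have e2: "e / 2 > 0" using e by simp
  have "\<forall>g\<in>G. eventually (\<lambda>p. norm (Qf (snd p) (fst p) (U g x) (U g (C x))) \<le> e / 2) FF"
  proof
    fix g assume "g \<in> G"
    then have g: "0 \<le> g" using G by auto
    show "eventually (\<lambda>p. norm (Qf (snd p) (fst p) (U g x) (U g (C x))) \<le> e / 2) FF"
      using RC[OF conjunct1[OF xa[OF g]] e2] xa[OF g] unfolding Qf_def by simp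
  qed
  then have ev: "eventually (\<lambda>p. \<forall>g\<in>G. norm (Qf (snd p) (fst p) (U g x) (U g (C x))) \<le> e / 2) FF"
    by (rule eventually_ball_finite[OF G(2)])
  show ?thesis using ev TA.ev_small[OF zero_less_one]
  proof eventually_elim
    case (elim p)
    show ?case
    proof
      fix a assume a: "a \<in> {0..t}"
      then obtain g where g: "g \<in> G" "dist g a < \<delta>" using G(3) by auto
      have gt: "g \<in> {0..t}" using g G by auto
      have n1: "norm (U a x - U g x) < \<eta>" using d1(2)[OF gt a] g by (simp add: \<delta>_def dist_norm abs_minus_commute)
      have n2: "norm (U a (C x) - U g (C x)) < \<eta>" using d2(2)[OF gt a] g by (simp add: \<delta>_def dist_norm abs_minus_commute)
      have "norm (Qf (snd p) (fst p) (U a x) (U a (C x)) - Qf (snd p) (fst p) (U g x) (U g (C x)))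
         \<le> KF * MP' * (lamF * norm (U a x - U g x) + norm (U a (C x) - U g (C x))) + MP' * norm (U a x - U g x)"
        using elim by (intro QLIP) auto
      also have "\<dots> \<le> KF * MP' * (lamF * \<eta> + \<eta>) + MP' * \<eta>"
        using n1 n2 KF1 lamF1 TA.MP'0 by (intro add_mono mult_left_mono) auto
      also have "\<dots> = L * \<eta>" by (simp add: L_def algebra_simps)
      also have "\<dots> \<le> e / 2" unfolding \<eta>_def using L0 e by (simp add: field_simps)
      finally have "norm (Qf (snd p) (fst p) (U a x) (U a (C x)) - Qf (snd p) (fst p) (U g x) (U g (C x))) \<le> e / 2" .
      moreover have "norm (Qf (snd p) (fst p) (U g x) (U g (C x))) \<le> e / 2" using elim g by blast
      ultimately show "norm (Qf (snd p) (fst p) (U a x) (U a (C x))) \<le> e"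
        using norm_triangle_sub[of "Qf (snd p) (fst p) (U a x) (U a (C x))" "Qf (snd p) (fst p) (U g x) (U g (C x))"]
        by linarith
    qed
  qed
qed

abbreviation SS :: "(nat \<times> nat) filter" where "SS \<equiv> sequentially \<times>\<^sub>F sequentially"

lemma FF_SS:
  assumes t: "t > 0" and ev: "eventually (\<lambda>p. Q (fst p) (snd p)) FF"
  shows "eventually (\<lambda>nm. Q (t / real (fst nm)) (snd nm)) SS"
proof -
  obtain d N where d: "d > 0" and H: "\<forall>h m. 0 < h \<longrightarrow> h < d \<longrightarrow> N \<le> m \<longrightarrow> Q h m"
    using EVD[OF ev] by blast
  define N' where "N' = max N (nat \<lceil>t / d\<rceil> + 1)"
  show ?thesis unfolding eventually_prod_sequentially
  proof (intro exI[of _ N'] allI impI)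
    fix m n assume m: "N' \<le> m" and n: "N' \<le> n"
    have "real n \<ge> real (nat \<lceil>t / d\<rceil> + 1)" using n by (simp add: N'_def)
    moreover have "real (nat \<lceil>t / d\<rceil>) \<ge> t / d" by linarith
    ultimately have rn: "real n > t / d" by simp
    have "t / d > 0" using t d by simp
    then have npos: "real n > 0" using rn by linarith
    have "t < d * real n" using rn d by (simp add: field_simps)
    then have "t / real n < d" using npos by (simp add: field_simps)
    moreover have "t / real n > 0" using t npos by simp
    moreover have "N \<le> m" using m by (simp add: N'_def)
    ultimately show "Q (t / real (fst (n, m))) (snd (n, m))" using H by simp
  qed
qed

lemma SS_n: "eventually (\<lambda>nm. fst nm \<ge> N) SS"
  unfolding eventually_prod_sequentially by auto
lemma SS_m: "eventually (\<lambda>nm. snd nm \<ge> N) SS"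
  unfolding eventually_prod_sequentially by auto

lemma TEL:
  assumes t: "t > 0" and r0: "0 \<le> r0" and e: "e > 0"
  shows "eventually (\<lambda>nm. norm (Rm (snd nm) (t / real (fst nm)) ((Fm (snd nm) (t / real (fst nm)) ^^ fst nm) (P (snd nm) (UU.G y r0)))
          - Rm (snd nm) (t / real (fst nm)) (P (snd nm) (U t (UU.G y r0)))) \<le> e) SS"
proof -
  define x where "x = UU.G y r0"
  have xD: "x \<in> DC" using UU.avg_D[OF r0] by (simp add: x_def)
  define Kt where "Kt = KF * exp (\<omega>F * t)"
  have Kt: "Kt \<ge> 1"
  proof -
    have "exp (\<omega>F * t) \<ge> 1" using \<omega>F0 t by simp
    then show ?thesis using KF1 mult_mono[of 1 KF 1 "exp (\<omega>F * t)"] unfolding Kt_def by simp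
  qed
  define \<epsilon>A where "\<epsilon>A = e / (2 * t * Kt)"
  define \<epsilon>B where "\<epsilon>B = \<epsilon>A / (KF * MP' + 1)"
  have KM: "KF * MP' \<ge> 0" using KF1 TA.MP'0 by simp
  have eA: "\<epsilon>A > 0" using e t Kt by (simp add: \<epsilon>A_def)
  have eB: "\<epsilon>B > 0" using eA KM by (simp add: \<epsilon>B_def add_nonneg_pos)
  obtain \<delta> where \<delta>: "\<delta> > 0" and HB: "\<forall>h a. 0 < h \<and> h < \<delta> \<and> 0 \<le> a \<and> a \<le> t \<longrightarrow>
     norm (U h (U a x) - U a x - h *\<^sub>R U a (C x)) \<le> \<epsilon>B * h"
    using UU.avg_E[OF r0 _ eB, of t y] t unfolding x_def by auto
  have evA: "eventually (\<lambda>p. (\<forall>a\<in>{0..t}. norm (Qf (snd p) (fst p) (U a x) (U a (C x))) \<le> \<epsilon>A)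
      \<and> (0 < fst p \<and> fst p < min \<delta> 1)) FF"
    using URC[OF xD _ eA, of t] t TA.ev_small[of "min \<delta> 1"] \<delta> by (auto intro: eventually_conj)
  have evS: "eventually (\<lambda>nm. (\<forall>a\<in>{0..t}. norm (Qf (snd nm) (t / real (fst nm)) (U a x) (U a (C x))) \<le> \<epsilon>A)
      \<and> (0 < t / real (fst nm) \<and> t / real (fst nm) < min \<delta> 1)) SS"
    by (rule FF_SS[OF t evA])
  show ?thesis using evS SS_n[of 1] unfolding x_def[symmetric]
  proof eventually_elim
    case (elim nm)
    define n where "n = fst nm"
    define m where "m = snd nm"
    define \<tau> where "\<tau> = t / real n"
    have n1: "n \<ge> 1" using elim by (simp add: n_def)
    have tau: "0 < \<tau>" "\<tau> \<le> 1" "\<tau> < \<delta>" using elim by (auto simp: \<tau>_def n_def)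
    have nt: "real n * \<tau> = t" using n1 by (simp add: \<tau>_def)
    have QA: "\<And>a. a \<in> {0..t} \<Longrightarrow> norm (Qf m \<tau> (U a x) (U a (C x))) \<le> \<epsilon>A"
      using elim by (simp add: \<tau>_def n_def m_def)
    note R = R_props[OF tau(1,2), where m=m]
    note FK = Fk_props[OF tau(1,2), where m=m]
    let ?F = "Fm m \<tau>" and ?R = "Rm m \<tau>"
    define u where "u k = U (real k * \<tau>) x" for k
    define cu where "cu k = U (real k * \<tau>) (C x)" for k
    define E where "E k = u (Suc k) - u k - \<tau> *\<^sub>R cu k" for k
    define b where "b k = (?F ^^ (n - k)) (?R (P m (u k)))" for k
    have yV: "\<And>k. P m (u k) \<in> V m" by (simp add: TA.P_in)
    have RyV: "\<And>k. ?R (P m (u k)) \<in> V m" using R(1) yV by blast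
    have uSuc: "\<And>k. u (Suc k) = U \<tau> (u k)"
    proof -
      fix k
      have "real (Suc k) * \<tau> = \<tau> + real k * \<tau>" by (simp add: algebra_simps)
      then show "u (Suc k) = U \<tau> (u k)" unfolding u_def using UU.Tsg[of \<tau> "real k * \<tau>" x] tau by simp
    qed
    have Ebnd: "\<And>k. k < n \<Longrightarrow> norm (E k) \<le> \<epsilon>B * \<tau>"
    proof -
      fix k assume k: "k < n"
      have "real k * \<tau> \<le> real n * \<tau>" using k tau by (intro mult_right_mono) auto
      then have "real k * \<tau> \<le> t" using nt by simp
      moreover have "E k = U \<tau> (U (real k * \<tau>) x) - U (real k * \<tau>) x - \<tau> *\<^sub>R U (real k * \<tau>) (C x)"
        unfolding E_def uSuc by (simp add: u_def cu_def)
      ultimately show "norm (E k) \<le> \<epsilon>B * \<tau>" using HB[rule_format, of \<tau> "real k * \<tau>"] tau by auto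
    qed
    have diff: "b k - b (Suc k) = (?F ^^ (n - Suc k)) (\<tau> *\<^sub>R Qf m \<tau> (u k) (cu k) - ?R (P m (E k)))"
      if k: "k < n" for k
    proof -
      have nk: "n - k = Suc (n - Suc k)" using k by simp
      have PcV: "P m (cu k) \<in> V m" "P m (E k) \<in> V m" by (auto simp: TA.P_in)
      have yS: "P m (u (Suc k)) = P m (u k) + \<tau> *\<^sub>R P m (cu k) + P m (E k)"
        unfolding E_def by (simp add: TA.P_add TA.P_diff TA.P_scale algebra_simps)
      have RyS: "?R (P m (u (Suc k))) = ?R (P m (u k)) + \<tau> *\<^sub>R ?R (P m (cu k)) + ?R (P m (E k))"
        unfolding yS using R(8) R(4) yV PcV V_scale V_add by simp
      have FR: "?F (?R (P m (u k))) = ?R (P m (u k)) + \<tau> *\<^sub>R (lamF *\<^sub>R ?R (P m (u k)) - P m (u k))"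
        using R(6)[OF yV[of k]] by (simp add: algebra_simps)
      have Qe: "Qf m \<tau> (u k) (cu k) = lamF *\<^sub>R ?R (P m (u k)) - ?R (P m (cu k)) - P m (u k)"
        unfolding Qf_def using R(3)[of "lamF *\<^sub>R P m (u k)" "P m (cu k)"] R(4)[OF yV[of k]] yV PcV V_scale
        by (simp add: TA.P_diff TA.P_scale)
      have inner: "?F (?R (P m (u k))) - ?R (P m (u (Suc k))) = \<tau> *\<^sub>R Qf m \<tau> (u k) (cu k) - ?R (P m (E k))"
        unfolding FR RyS Qe by (simp add: algebra_simps)
      have FRV: "?F (?R (P m (u k))) \<in> V m" using Fm_in RyV tau by simp
      have "b k - b (Suc k) = (?F ^^ (n - Suc k)) (?F (?R (P m (u k)))) - (?F ^^ (n - Suc k)) (?R (P m (u (Suc k))))"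
        unfolding b_def nk by (simp add: funpow_swap1)
      also have "\<dots> = (?F ^^ (n - Suc k)) (?F (?R (P m (u k))) - ?R (P m (u (Suc k))))"
        using FK(2)[OF FRV RyV] by simp
      finally show ?thesis unfolding inner .
    qed
    define bd where "bd = Kt * (\<tau> * \<epsilon>A + KF * MP' * (\<epsilon>B * \<tau>))"
    have bnd: "norm (b k - b (Suc k)) \<le> bd" if k: "k < n" for k
    proof -
      have ka: "real k * \<tau> \<in> {0..t}"
      proof -
        have "real k * \<tau> \<le> real n * \<tau>" using k tau by (intro mult_right_mono) auto
        then show ?thesis using nt tau by auto
      qed
      have PEV: "P m (E k) \<in> V m" by (simp add: TA.P_in)
      define z where "z = \<tau> *\<^sub>R Qf m \<tau> (u k) (cu k) - ?R (P m (E k))"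
      have q1: "Qf m \<tau> (u k) (cu k) \<in> V m" unfolding Qf_def by (rule V_diff[OF R(1)[OF TA.P_in] TA.P_in])
      have zV: "z \<in> V m" unfolding z_def by (rule V_diff[OF V_scale[OF q1] R(1)[OF PEV]])
      have nz: "norm z \<le> \<tau> * \<epsilon>A + KF * MP' * (\<epsilon>B * \<tau>)"
      proof -
        have "norm z \<le> norm (\<tau> *\<^sub>R Qf m \<tau> (u k) (cu k)) + norm (?R (P m (E k)))"
          unfolding z_def by (rule norm_triangle_ineq4)
        also have "norm (\<tau> *\<^sub>R Qf m \<tau> (u k) (cu k)) \<le> \<tau> * \<epsilon>A"
          using QA[OF ka] tau unfolding u_def cu_def by (simp add: mult_left_mono)
        also have "norm (?R (P m (E k))) \<le> KF * MP' * (\<epsilon>B * \<tau>)"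
        proof -
          have "norm (?R (P m (E k))) \<le> KF * norm (P m (E k))" by (rule R(2)[OF PEV])
          also have "\<dots> \<le> KF * (MP' * norm (E k))" using TA.P_norm KF1 by (intro mult_left_mono) auto
          also have "\<dots> \<le> KF * (MP' * (\<epsilon>B * \<tau>))" using Ebnd[OF k] KF1 TA.MP'0 by (intro mult_left_mono) auto
          finally show ?thesis by (simp add: mult.assoc)
        qed
        finally show ?thesis by simp
      qed
      have "norm (b k - b (Suc k)) = norm ((?F ^^ (n - Suc k)) z)" unfolding diff[OF k] z_def ..
      also have "\<dots> \<le> KF * exp (\<omega>F * \<tau>) ^ (n - Suc k) * norm z" by (rule Fm_pow[OF tau(1,2) zV])
      also have "exp (\<omega>F * \<tau>) ^ (n - Suc k) \<le> exp (\<omega>F * t)"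
      proof -
        have "exp (\<omega>F * \<tau>) ^ (n - Suc k) = exp (real (n - Suc k) * (\<omega>F * \<tau>))" by (simp add: exp_of_nat_mult)
        also have "\<dots> \<le> exp (\<omega>F * t)"
        proof -
          have "real (n - Suc k) * (\<omega>F * \<tau>) \<le> real n * (\<omega>F * \<tau>)" using \<omega>F0 tau by (intro mult_right_mono) auto
          also have "\<dots> = \<omega>F * t" using nt by (simp add: algebra_simps)
          finally show ?thesis by simp
        qed
        finally show ?thesis .
      qed
      then have "KF * exp (\<omega>F * \<tau>) ^ (n - Suc k) * norm z \<le> KF * exp (\<omega>F * t) * norm z"
        using KF1 by (intro mult_right_mono mult_left_mono) auto
      also have "\<dots> \<le> Kt * (\<tau> * \<epsilon>A + KF * MP' * (\<epsilon>B * \<tau>))"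
        unfolding Kt_def using nz KF1 by (intro mult_left_mono) auto
      finally show ?thesis unfolding bd_def .
    qed
    have teq: "b 0 - b n = (\<Sum>k<n. b k - b (Suc k))" by (rule sum_lessThan_telescope'[symmetric])
    have "norm (b 0 - b n) \<le> (\<Sum>k<n. norm (b k - b (Suc k)))" unfolding teq by (rule norm_sum)
    also have "\<dots> \<le> (\<Sum>k<n. bd)" using bnd by (intro sum_mono) auto
    also have "\<dots> = real n * bd" by simp
    also have "\<dots> = Kt * t * (\<epsilon>A + KF * MP' * \<epsilon>B)"
      unfolding bd_def using nt by (simp add: algebra_simps)
    also have "\<dots> \<le> e"
    proof -
      have "Kt * t * \<epsilon>A = e / 2" using Kt t unfolding \<epsilon>A_def by (simp add: field_simps)
      moreover have "Kt * t * (KF * MP' * \<epsilon>B) \<le> e / 2"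
      proof -
        have "Kt * t * (KF * MP' * \<epsilon>B) = (KF * MP' / (KF * MP' + 1)) * (Kt * t * \<epsilon>A)"
          unfolding \<epsilon>B_def by (simp add: divide_inverse ac_simps)
        also have "Kt * t * \<epsilon>A = e / 2" using Kt t unfolding \<epsilon>A_def by (simp add: field_simps)
        finally have "Kt * t * (KF * MP' * \<epsilon>B) = (KF * MP' / (KF * MP' + 1)) * (e / 2)" .
        also have "\<dots> \<le> 1 * (e / 2)" using KM e by (intro mult_right_mono) auto
        finally show ?thesis by simp
      qed
      ultimately show ?thesis by (simp add: algebra_simps)
    qed
    finally have fin: "norm (b 0 - b n) \<le> e" .
    have b0: "b 0 = ?R ((?F ^^ n) (P m x))"
      unfolding b_def u_def using R(7)[of "P m x" n] UU.T0[of x] by (simp add: TA.P_in)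
    have bn: "b n = ?R (P m (U t x))" unfolding b_def u_def using nt by simp
    show ?case using fin unfolding b0 bn by (simp add: \<tau>_def n_def m_def)
  qed
qed

lemma SS_snd: "eventually Q sequentially \<Longrightarrow> eventually (\<lambda>nm. Q (snd nm)) SS"
proof -
  assume "eventually Q sequentially"
  then obtain N where "\<And>m. m \<ge> N \<Longrightarrow> Q m" unfolding eventually_sequentially by blast
  then show ?thesis unfolding eventually_prod_sequentially by auto
qed

lemma SS_good: "t > 0 \<Longrightarrow> eventually (\<lambda>nm. fst nm \<ge> 1 \<and> 0 < t / real (fst nm) \<and> t / real (fst nm) \<le> 1) SS"
proof -
  assume t: "t > 0"
  show ?thesis using SS_n[of "nat \<lceil>t\<rceil> + 1"]
  proof eventually_elim
    case (elim nm)
    then have "real (fst nm) \<ge> t" "fst nm \<ge> 1" by linarith+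
    then show ?case using t by (simp add: divide_le_eq_1)
  qed
qed

lemma Fn_bnd:
  assumes t: "0 < \<tau>" "\<tau> \<le> 1" and y: "y \<in> V m" and nt: "real n * \<tau> = t"
  shows "norm ((Fm m \<tau> ^^ n) y) \<le> KF * exp (\<omega>F * t) * norm y"
proof -
  have "norm ((Fm m \<tau> ^^ n) y) \<le> KF * exp (\<omega>F * \<tau>) ^ n * norm y" by (rule Fm_pow[OF t y])
  also have "exp (\<omega>F * \<tau>) ^ n = exp (\<omega>F * t)" using nt by (simp add: exp_of_nat_mult[symmetric] algebra_simps)
  finally show ?thesis .
qed

lemma U_bnd: assumes t0: "0 \<le> t" shows "\<exists>KU\<ge>0. \<forall>z. norm (U t z) \<le> KU * norm z"
proof -
  obtain L where "L \<ge> 0" "bounded_op_on UNIV UNIV L (U t)" using UU.T_lip[OF t0] by blast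
  then show ?thesis using bop_norm by blast
qed

lemma C9b:
  assumes t: "t > 0" and e: "e > 0"
  shows "eventually (\<lambda>nm. norm (Rm (snd nm) (t / real (fst nm)) ((Fm (snd nm) (t / real (fst nm)) ^^ fst nm) (P (snd nm) z))
          - Rm (snd nm) (t / real (fst nm)) (P (snd nm) (U t z))) \<le> e) SS"
proof -
  obtain KU where KU: "KU \<ge> 0" "\<And>z. norm (U t z) \<le> KU * norm z" using U_bnd[of t] t by auto
  define B where "B = KF * (KF * exp (\<omega>F * t) * MP' + MP' * KU)"
  have B0: "B \<ge> 0" using KF1 TA.MP'0 KU by (simp add: B_def)
  let ?Lf = "\<lambda>nm z. norm (Rm (snd nm) (t / real (fst nm)) ((Fm (snd nm) (t / real (fst nm)) ^^ fst nm) (P (snd nm) z))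
          - Rm (snd nm) (t / real (fst nm)) (P (snd nm) (U t z)))"
  show ?thesis
  proof (rule dense_ext[where Lf = ?Lf and B = B, OF UU.avg_dense _ _ B0 e])
    fix z e' assume "z \<in> {UU.G y r | y r. 0 \<le> r}" "(e'::real) > 0"
    then obtain y r where "z = UU.G y r" "0 \<le> r" by blast
    then show "eventually (\<lambda>nm. ?Lf nm z \<le> e') SS" using TEL[OF t _ \<open>e' > 0\<close>] by simp
  next
    show "eventually (\<lambda>nm. \<forall>z z'. ?Lf nm z \<le> ?Lf nm z' + B * norm (z - z')) SS"
      using SS_good[OF t]
    proof eventually_elim
      case (elim nm)
      define n where "n = fst nm"
      define m where "m = snd nm"
      define \<tau> where "\<tau> = t / real n"
      have tau: "0 < \<tau>" "\<tau> \<le> 1" using elim by (auto simp: \<tau>_def n_def)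
      have nt: "real n * \<tau> = t" using elim by (simp add: \<tau>_def n_def)
      note R = R_props[OF tau, where m=m]
      note FK = Fk_props[OF tau, where m=m]
      show ?case
      proof (intro allI)
        fix z z' :: 'a
        have PV: "\<And>w. P m w \<in> V m" by (simp add: TA.P_in)
        have FPV: "\<And>w. (Fm m \<tau> ^^ n) (P m w) \<in> V m" using FK(1) PV by blast
        have eq: "(Rm m \<tau> ((Fm m \<tau> ^^ n) (P m z)) - Rm m \<tau> (P m (U t z))) -
                  (Rm m \<tau> ((Fm m \<tau> ^^ n) (P m z')) - Rm m \<tau> (P m (U t z')))
           = Rm m \<tau> ((Fm m \<tau> ^^ n) (P m (z - z'))) - Rm m \<tau> (P m (U t (z - z')))"
        proof -
          have "(Fm m \<tau> ^^ n) (P m (z - z')) = (Fm m \<tau> ^^ n) (P m z) - (Fm m \<tau> ^^ n) (P m z')"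
            using FK(2)[OF PV PV] by (simp add: TA.P_diff)
          moreover have "P m (U t (z - z')) = P m (U t z) - P m (U t z')" using UU.T_diff t by (simp add: TA.P_diff)
          ultimately show ?thesis using R(3)[OF FPV FPV] R(3)[OF PV PV] by simp
        qed
        have "norm (Rm m \<tau> ((Fm m \<tau> ^^ n) (P m (z - z'))) - Rm m \<tau> (P m (U t (z - z')))) \<le>
              KF * norm ((Fm m \<tau> ^^ n) (P m (z - z'))) + KF * norm (P m (U t (z - z')))"
          using R(2)[OF FPV] R(2)[OF PV] norm_triangle_ineq4 by (meson add_mono order_trans)
        also have "\<dots> \<le> KF * (KF * exp (\<omega>F * t) * (MP' * norm (z - z'))) + KF * (MP' * (KU * norm (z - z')))"
        proof (intro add_mono mult_left_mono)
          show "norm ((Fm m \<tau> ^^ n) (P m (z - z'))) \<le> KF * exp (\<omega>F * t) * (MP' * norm (z - z'))"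
            using Fn_bnd[OF tau PV nt] TA.P_norm KF1 by (meson mult_left_mono order_trans exp_ge_zero mult_nonneg_nonneg less_imp_le zero_le_one)
          show "norm (P m (U t (z - z'))) \<le> MP' * (KU * norm (z - z'))"
            using TA.P_norm KU TA.MP'0 by (meson mult_left_mono order_trans)
        qed (use KF1 in auto)
        also have "\<dots> = B * norm (z - z')" by (simp add: B_def algebra_simps)
        finally have "norm ((Rm m \<tau> ((Fm m \<tau> ^^ n) (P m z)) - Rm m \<tau> (P m (U t z))) -
                  (Rm m \<tau> ((Fm m \<tau> ^^ n) (P m z')) - Rm m \<tau> (P m (U t z')))) \<le> B * norm (z - z')"
          unfolding eq .
        then show "?Lf nm z \<le> ?Lf nm z' + B * norm (z - z')"
          using norm_triangle_sub[of "Rm m \<tau> ((Fm m \<tau> ^^ n) (P m z)) - Rm m \<tau> (P m (U t z))"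
              "Rm m \<tau> ((Fm m \<tau> ^^ n) (P m z')) - Rm m \<tau> (P m (U t z'))"]
          unfolding n_def m_def \<tau>_def by linarith
      qed
    qed
  qed
qed

lemma C9c:
  assumes t: "t > 0" and e: "e > 0" and u: "u \<in> DC"
  shows "eventually (\<lambda>nm. norm ((Fm (snd nm) (t / real (fst nm)) ^^ fst nm) (P (snd nm) u) - P (snd nm) (U t u)) \<le> e) SS"
proof -
  define Kt where "Kt = KF * exp (\<omega>F * t)"
  have Kt: "Kt \<ge> 1"
  proof -
    have "exp (\<omega>F * t) \<ge> 1" using \<omega>F0 t by simp
    then show ?thesis using KF1 mult_mono[of 1 KF 1 "exp (\<omega>F * t)"] unfolding Kt_def by simp
  qed
  define v where "v = lamF *\<^sub>R u - C u"
  define u' where "u' = U t u"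
  have u'D: "u' \<in> DC" and Cu': "C u' = U t (C u)" using UU.D_inv[OF u] t by (auto simp: u'_def)
  have Uv: "U t v = lamF *\<^sub>R u' - C u'" unfolding v_def u'_def Cu'[unfolded u'_def]
    using UU.T_diff UU.T_scale t by simp
  have e3: "e / 3 > 0" "e / (3 * Kt) > 0" using e Kt by auto
  have ev1: "eventually (\<lambda>nm. norm (Rm (snd nm) (t / real (fst nm)) (P (snd nm) v) - P (snd nm) u) \<le> e / (3 * Kt)) SS"
    using FF_SS[OF t RC[OF u e3(2)]] unfolding v_def by simp
  have ev2: "eventually (\<lambda>nm. norm (Rm (snd nm) (t / real (fst nm)) (P (snd nm) (U t v)) - P (snd nm) u') \<le> e / 3) SS"
    using FF_SS[OF t RC[OF u'D e3(1)]] unfolding Uv by simp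
  have ev3: "eventually (\<lambda>nm. norm (Rm (snd nm) (t / real (fst nm)) ((Fm (snd nm) (t / real (fst nm)) ^^ fst nm) (P (snd nm) v))
          - Rm (snd nm) (t / real (fst nm)) (P (snd nm) (U t v))) \<le> e / 3) SS"
    by (rule C9b[OF t e3(1)])
  show ?thesis using ev1 ev2 ev3 SS_good[OF t]
  proof eventually_elim
    case (elim nm)
    define n where "n = fst nm"
    define m where "m = snd nm"
    define \<tau> where "\<tau> = t / real n"
    have tau: "0 < \<tau>" "\<tau> \<le> 1" using elim by (auto simp: \<tau>_def n_def)
    have nt: "real n * \<tau> = t" using elim by (simp add: \<tau>_def n_def)
    note R = R_props[OF tau, where m=m]
    note FK = Fk_props[OF tau, where m=m]
    let ?F = "Fm m \<tau> ^^ n" and ?R = "Rm m \<tau>"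
    have PV: "\<And>w. P m w \<in> V m" by (simp add: TA.P_in)
    have RV: "?R (P m v) \<in> V m" using R(1) PV by blast
    have a1: "norm (?R (P m v) - P m u) \<le> e / (3 * Kt)" using elim by (simp add: n_def m_def \<tau>_def)
    have a2: "norm (?R (P m (U t v)) - P m u') \<le> e / 3" using elim by (simp add: n_def m_def \<tau>_def)
    have a3: "norm (?R (?F (P m v)) - ?R (P m (U t v))) \<le> e / 3" using elim by (simp add: n_def m_def \<tau>_def)
    have eq: "?F (P m u) - P m (U t u) = ?F (P m u - ?R (P m v)) + (?R (?F (P m v)) - ?R (P m (U t v))) + (?R (P m (U t v)) - P m u')"
      using FK(2)[OF PV RV] R(7)[OF PV] by (simp add: u'_def)
    have b1: "norm (?F (P m u - ?R (P m v))) \<le> e / 3"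
    proof -
      have "norm (?F (P m u - ?R (P m v))) \<le> Kt * norm (P m u - ?R (P m v))"
        unfolding Kt_def by (rule Fn_bnd[OF tau V_diff[OF PV RV] nt])
      also have "\<dots> \<le> Kt * (e / (3 * Kt))" using a1 Kt by (intro mult_left_mono) (auto simp: norm_minus_commute)
      also have "\<dots> = e / 3" using Kt by simp
      finally show ?thesis .
    qed
    have "norm (?F (P m u) - P m (U t u)) \<le> e / 3 + e / 3 + e / 3"
      unfolding eq using b1 a2 a3
      by (intro order_trans[OF norm_triangle_ineq] add_mono order_trans[OF norm_triangle_ineq]) auto
    then show ?case by (simp add: n_def m_def \<tau>_def)
  qed
qed

lemma C9d:
  assumes t: "t > 0" and e: "e > 0"
  shows "eventually (\<lambda>nm. norm ((Fm (snd nm) (t / real (fst nm)) ^^ fst nm) (P (snd nm) x) - P (snd nm) (U t x)) \<le> e) SS"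
proof -
  obtain KU where KU: "KU \<ge> 0" "\<And>z. norm (U t z) \<le> KU * norm z" using U_bnd[of t] t by auto
  define B where "B = KF * exp (\<omega>F * t) * MP' + MP' * KU"
  have B0: "B \<ge> 0" using KF1 TA.MP'0 KU by (simp add: B_def)
  have dense: "closure DC = UNIV"
  proof -
    have "{UU.G y r | y r. 0 \<le> r} \<subseteq> DC" using UU.avg_D by blast
    then have "closure {UU.G y r | y r. 0 \<le> r} \<subseteq> closure DC" by (rule closure_mono)
    then show ?thesis using UU.avg_dense by auto
  qed
  let ?Lf = "\<lambda>nm z. norm ((Fm (snd nm) (t / real (fst nm)) ^^ fst nm) (P (snd nm) z) - P (snd nm) (U t z))"
  show ?thesis
  proof (rule dense_ext[where Lf = ?Lf and B = B, OF dense _ _ B0 e])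
    fix z e' assume "z \<in> DC" "(e'::real) > 0"
    then show "eventually (\<lambda>nm. ?Lf nm z \<le> e') SS" using C9c[OF t] by blast
  next
    show "eventually (\<lambda>nm. \<forall>z z'. ?Lf nm z \<le> ?Lf nm z' + B * norm (z - z')) SS"
      using SS_good[OF t]
    proof eventually_elim
      case (elim nm)
      define n where "n = fst nm"
      define m where "m = snd nm"
      define \<tau> where "\<tau> = t / real n"
      have tau: "0 < \<tau>" "\<tau> \<le> 1" using elim by (auto simp: \<tau>_def n_def)
      have nt: "real n * \<tau> = t" using elim by (simp add: \<tau>_def n_def)
      note FK = Fk_props[OF tau, where m=m]
      show ?case
      proof (intro allI)
        fix z z' :: 'a
        have PV: "\<And>w. P m w \<in> V m" by (simp add: TA.P_in)
        have eq: "((Fm m \<tau> ^^ n) (P m z) - P m (U t z)) - ((Fm m \<tau> ^^ n) (P m z') - P m (U t z'))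
           = (Fm m \<tau> ^^ n) (P m (z - z')) - P m (U t (z - z'))"
        proof -
          have "(Fm m \<tau> ^^ n) (P m (z - z')) = (Fm m \<tau> ^^ n) (P m z) - (Fm m \<tau> ^^ n) (P m z')"
            using FK(2)[OF PV PV] by (simp add: TA.P_diff)
          moreover have "P m (U t (z - z')) = P m (U t z) - P m (U t z')" using UU.T_diff t by (simp add: TA.P_diff)
          ultimately show ?thesis by simp
        qed
        have "norm ((Fm m \<tau> ^^ n) (P m (z - z')) - P m (U t (z - z'))) \<le>
              norm ((Fm m \<tau> ^^ n) (P m (z - z'))) + norm (P m (U t (z - z')))"
          by (rule norm_triangle_ineq4)
        also have "\<dots> \<le> KF * exp (\<omega>F * t) * (MP' * norm (z - z')) + MP' * (KU * norm (z - z'))"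
        proof (intro add_mono)
          have "norm ((Fm m \<tau> ^^ n) (P m (z - z'))) \<le> KF * exp (\<omega>F * t) * norm (P m (z - z'))"
            by (rule Fn_bnd[OF tau PV nt])
          also have "\<dots> \<le> KF * exp (\<omega>F * t) * (MP' * norm (z - z'))"
            using TA.P_norm KF1 by (intro mult_left_mono) auto
          finally show "norm ((Fm m \<tau> ^^ n) (P m (z - z'))) \<le> KF * exp (\<omega>F * t) * (MP' * norm (z - z'))" .
          have "norm (P m (U t (z - z'))) \<le> MP' * norm (U t (z - z'))" by (rule TA.P_norm)
          also have "\<dots> \<le> MP' * (KU * norm (z - z'))" using KU TA.MP'0 by (intro mult_left_mono) auto
          finally show "norm (P m (U t (z - z'))) \<le> MP' * (KU * norm (z - z'))" .
        qed
        also have "\<dots> = B * norm (z - z')" by (simp add: B_def algebra_simps)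
        finally have "norm (((Fm m \<tau> ^^ n) (P m z) - P m (U t z)) - ((Fm m \<tau> ^^ n) (P m z') - P m (U t z'))) \<le> B * norm (z - z')"
          unfolding eq .
        then show "?Lf nm z \<le> ?Lf nm z' + B * norm (z - z')"
          using norm_triangle_sub[of "(Fm m \<tau> ^^ n) (P m z) - P m (U t z)" "(Fm m \<tau> ^^ n) (P m z') - P m (U t z')"]
          unfolding n_def m_def \<tau>_def by linarith
      qed
    qed
  qed
qed

lemma FINAL:
  assumes t: "t > 0" and e: "e > 0"
  shows "\<exists>N. \<forall>n m. n \<ge> N \<and> m \<ge> N \<longrightarrow>
           norm (J m (((\<lambda>z. Tm m (t / (2 * real n)) (Sm m (t / real n) (Tm m (t / (2 * real n)) z))) ^^ n) (P m x))
                 - U t x) \<le> e"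
proof -
  define MJ' where "MJ' = max MJ 0"
  have MJ0: "MJ' \<ge> 0" by (simp add: MJ'_def)
  have e2: "e / 2 > 0" "e / (2 * (MJ' + 1)) > 0" using e MJ0 by (auto simp: add_nonneg_pos)
  have ev1: "eventually (\<lambda>nm. norm ((Fm (snd nm) (t / real (fst nm)) ^^ fst nm) (P (snd nm) x) - P (snd nm) (U t x))
      \<le> e / (2 * (MJ' + 1))) SS" by (rule C9d[OF t e2(2)])
  have "eventually (\<lambda>m. dist (J m (P m (U t x))) (U t x) < e / 2) sequentially" using tendstoD[OF JP e2(1)] .
  then have ev2: "eventually (\<lambda>nm. dist (J (snd nm) (P (snd nm) (U t x))) (U t x) < e / 2) SS" by (rule SS_snd)
  have "eventually (\<lambda>nm. norm (J (snd nm) (((\<lambda>z. Tm (snd nm) (t / (2 * real (fst nm))) (Sm (snd nm) (t / real (fst nm))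
       (Tm (snd nm) (t / (2 * real (fst nm))) z))) ^^ fst nm) (P (snd nm) x)) - U t x) \<le> e) SS"
    using ev1 ev2
  proof eventually_elim
    case (elim nm)
    define n where "n = fst nm"
    define m where "m = snd nm"
    have Fe: "(\<lambda>z. Tm m (t / (2 * real n)) (Sm m (t / real n) (Tm m (t / (2 * real n)) z))) = Fm m (t / real n)"
    proof (rule ext)
      fix z
      have h2: "t / (2 * real n) = (t / real n) / 2" by simp
      show "Tm m (t / (2 * real n)) (Sm m (t / real n) (Tm m (t / (2 * real n)) z)) = Fm m (t / real n) z"
        unfolding Fm_def h2 ..
    qed
    have a: "(Fm m (t / real n) ^^ n) (P m x) \<in> V m"
    proof -
      have "\<And>k y. y \<in> V m \<Longrightarrow> (Fm m (t / real n) ^^ k) y \<in> V m"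
      proof -
        fix k y assume "y \<in> V m"
        then show "(Fm m (t / real n) ^^ k) y \<in> V m" using t by (induction k) (auto simp: Fm_in)
      qed
      then show ?thesis using TA.P_in by blast
    qed
    have Jd: "J m ((Fm m (t / real n) ^^ n) (P m x)) - J m (P m (U t x)) = J m ((Fm m (t / real n) ^^ n) (P m x) - P m (U t x))"
      using bop_diff[OF J_bd subV a TA.P_in] by simp
    have j1: "norm (J m ((Fm m (t / real n) ^^ n) (P m x) - P m (U t x))) \<le> MJ' * norm ((Fm m (t / real n) ^^ n) (P m x) - P m (U t x))"
      unfolding MJ'_def by (rule bop_norm[OF bop_nonneg[OF J_bd] V_diff[OF a TA.P_in]])
    have el: "norm ((Fm m (t / real n) ^^ n) (P m x) - P m (U t x)) \<le> e / (2 * (MJ' + 1))"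
      using elim(1) unfolding n_def m_def .
    have j2: "MJ' * norm ((Fm m (t / real n) ^^ n) (P m x) - P m (U t x)) \<le> MJ' * (e / (2 * (MJ' + 1)))"
      by (rule mult_left_mono[OF el MJ0])
    have j3: "MJ' * (e / (2 * (MJ' + 1))) \<le> e / 2"
    proof -
      have nz: "MJ' + 1 \<noteq> 0" using MJ0 by linarith
      have "MJ' * (e / (2 * (MJ' + 1))) = (MJ' / (MJ' + 1)) * (e / 2)" using nz by (simp add: field_simps)
      also have "\<dots> \<le> 1 * (e / 2)" using MJ0 e by (intro mult_right_mono) auto
      finally show ?thesis by simp
    qed
    have b1: "norm (J m ((Fm m (t / real n) ^^ n) (P m x)) - J m (P m (U t x))) \<le> e / 2"
      unfolding Jd using j1 j2 j3 by linarith
    have b2: "norm (J m (P m (U t x)) - U t x) < e / 2" using elim by (simp add: m_def dist_norm)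
    have sp: "J m ((Fm m (t / real n) ^^ n) (P m x)) - U t x =
       (J m ((Fm m (t / real n) ^^ n) (P m x)) - J m (P m (U t x))) + (J m (P m (U t x)) - U t x)" by simp
    have "norm (J m ((Fm m (t / real n) ^^ n) (P m x)) - U t x) \<le> e / 2 + e / 2"
      unfolding sp using b1 b2 by (intro order_trans[OF norm_triangle_ineq] add_mono) auto
    then have "norm (J m ((Fm m (t / real n) ^^ n) (P m x)) - U t x) \<le> e" by simp
    then show ?case unfolding n_def[symmetric] m_def[symmetric] Fe .
  qed
  then obtain N where "\<forall>m\<ge>N. \<forall>n\<ge>N. norm (J m (((\<lambda>z. Tm m (t / (2 * real n)) (Sm m (t / real n)
       (Tm m (t / (2 * real n)) z))) ^^ n) (P m x)) - U t x) \<le> e"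
    unfolding eventually_prod_sequentially by auto
  then show ?thesis by blast
qed

end

theorem mainTheorem6:
  fixes A B C :: "'a::banach \<Rightarrow> 'a" and DA DB DC :: "'a set"
    and T S U :: "real \<Rightarrow> 'a \<Rightarrow> 'a"
    and V :: "nat \<Rightarrow> 'b::banach set"
    and P :: "nat \<Rightarrow> 'a \<Rightarrow> 'b" and J :: "nat \<Rightarrow> 'b \<Rightarrow> 'a"
    and Am Bm :: "nat \<Rightarrow> 'b \<Rightarrow> 'b" and DAm DBm :: "nat \<Rightarrow> 'b set"
    and Tm Sm :: "nat \<Rightarrow> real \<Rightarrow> 'b \<Rightarrow> 'b"
    and MJ MP MT \<omega>T MS \<omega>S M \<omega> :: real
  assumes A_cl: "closed_operator DA A" and A_dense: "densely_defined DA"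
    and B_cl: "closed_operator DB B" and B_dense: "densely_defined DB"
    and A_gen: "generates_on UNIV DA A T"
    and B_gen: "generates_on UNIV DB B S"
    and C_closure: "is_operator_closure (DA \<inter> DB) (\<lambda>x. A x + B x) DC C"
    and C_dom: "DA \<inter> DB \<subseteq> DC"
    and C_gen: "generates_on UNIV DC C U"
    and V_sub: "\<And>m. closed_subspace (V m)"
    and P_bd: "\<And>m. bounded_op_on UNIV (V m) MP (P m)"
    and J_bd: "\<And>m. bounded_op_on (V m) UNIV MJ (J m)"
    and PJ: "\<And>m y. y \<in> V m \<Longrightarrow> P m (J m y) = y"
    and JP: "\<And>x. (\<lambda>m. J m (P m x)) \<longlonglongrightarrow> x"
    and Am_gen: "\<And>m. generates_on (V m) (DAm m) (Am m) (Tm m)"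
    and Bm_gen: "\<And>m. generates_on (V m) (DBm m) (Bm m) (Sm m)"
    and S1: "MT \<ge> 1" "\<And>h x. h > 0 \<Longrightarrow> norm (T h x) \<le> MT * exp (\<omega>T * h) * norm x"
      "\<And>m h y. h > 0 \<Longrightarrow> y \<in> V m \<Longrightarrow> norm (Tm m h y) \<le> MT * exp (\<omega>T * h) * norm y"
    and S2: "MS \<ge> 1" "\<And>h x. h > 0 \<Longrightarrow> norm (S h x) \<le> MS * exp (\<omega>S * h) * norm x"
      "\<And>m h y. h > 0 \<Longrightarrow> y \<in> V m \<Longrightarrow> norm (Sm m h y) \<le> MS * exp (\<omega>S * h) * norm y"
    and Sseq: "M \<ge> 1"
      "\<And>t k n m y. t \<ge> 0 \<Longrightarrow> n \<ge> 1 \<Longrightarrow> y \<in> V m \<Longrightarrow>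
         norm (((\<lambda>z. Sm m (t / real n) (Tm m (t / real n) z)) ^^ k) y)
           \<le> M * exp (real k * \<omega> * t / real n) * norm y"
    and C1: "\<And>x. x \<in> DA \<Longrightarrow> (\<forall>\<^sub>F m in sequentially. P m x \<in> DAm m) \<and>
               (\<lambda>m. J m (Am m (P m x))) \<longlonglongrightarrow> A x"
    and C2: "\<And>x. x \<in> DB \<Longrightarrow> (\<forall>\<^sub>F m in sequentially. P m x \<in> DBm m) \<and>
               (\<lambda>m. J m (Bm m (P m x))) \<longlonglongrightarrow> B x"
  shows "\<forall>t>0. \<forall>x. \<forall>\<epsilon>>0. \<exists>N. \<forall>n m. n \<ge> N \<and> m \<ge> N \<longrightarrow>
           norm (J m (((\<lambda>z. Tm m (t / (2 * real n)) (Sm m (t / real n) (Tm m (t / (2 * real n)) z))) ^^ n) (P m x))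
                 - U t x) \<le> \<epsilon>"
proof -
  interpret main A B C DA DB DC T S U V P J Am Bm DAm DBm Tm Sm MJ MP MT \<omega>T MS \<omega>S M \<omega>
    by unfold_locales (fact assms)+
  show ?thesis using FINAL by blast
qed

end
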